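(* Assume the setting of the context (random weights). Fix $T_1>0$ and suppose Assumptions (A1R), (A2R) and (A3R) hold. Then for every $\varepsilon>0$, \[\lim_{n\rightarrow\infty}\mathbb{P}_{\mu}\left(\sup_{x\in F}\sup_{t\geq T_1}\left|\beta(n)q^n_{\lfloor\gamma(n)t\rfloor}(g_n(x))-q_t(x)\right|>\varepsilon\right)=0.\]
   Context: Let $(E,d_E)$ be a metric space and $F\subseteq E$ such that $F\cap\overline{B}_E(x,r)$ is compact for all $x\in E$, $r>0$ ($\overline{B}_E$, $B_E$ closed and open balls in $E$). Let $d_F:=d_E|_{F\times F}$, $B_F(x,r)$ the open ball in $(F,d_F)$, $\rho\in F$, $\nu$ a Radon measure of full support on $(F,d_F)$ (extended to $E$ by $\nu(A):=\nu(A\cap F)$), and $(q_t(x))_{x\in F,t>0}$ jointly continuous in $(t,x)$ with $q_t\ge0$, $\int_Fq_t\,d\nu=1$ for each $t>0$. For a locally finite connected graph $G$ with at least two vertices and distinguished vertex $\rho(G)$: $d_G$ is the shortest-path metric, $B_G(x,r)$ the open $d_G$-ball; $\mu^G$ a symmetric weight with $\mu^G_{xy}>0$ iff $\{x,y\}$ is an edge; $\mu^G_x:=\sum_y\mu^G_{xy}$; $\nu^G(A):=\sum_{x\in A}\mu^G_x$; $X^G$ the discrete time simple random walk with $P_G(x,y)=\mu^G_{xy}/\mu^G_x$, law $\mathbf{P}^G_x$; $p^G_m(x,y):=\mathbf{P}^G_x(X^G_m=y)/\nu^G(\{y\})$, $q^G_m(x,y):=\frac12(p^G_m+p^G_{m+1})(x,y)$,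 $q^G_m(x):=q^G_m(\rho(G),x)$. $(G^n)_{n\ge1}$ are such graphs with $V(G^n)\subseteq E$, $\rho(G^n)=\rho$; write $\nu^n,X^n,q^n$ for $\nu^{G^n},X^{G^n},q^{G^n}$. The weights of all the $G^n$ are random, given by a random element of $(0,\infty)^{\cup_nE(G^n)}$ with law $\mathbb{P}_\mu$. $(\alpha(n)),(\beta(n)),(\gamma(n))$ are non-negative deterministic sequences diverging to $\infty$. For $x\in E$, $g_n(x)$ is a point of $V(G^n)$ minimising $d_E(x,\cdot)$. Assumption (A1R): (a) there is $c_1>0$ with $d_{G^n}(x,y)\ge c_1\alpha(n)d_E(x,y)$ for all $x,y\in V(G^n)$, $n\ge1$, and a non-negative $\tilde\alpha(n)=o(\alpha(n))$ such that for each $r>0$ there are $c_2<\infty$, $n_0$ with $d_{G^n}(x,y)\le c_2\alpha(n)d_E(x,y)+\tilde\alpha(n)$ for all $x,y\in V(G^n)\cap B_E(\rho,r)$, $n\ge n_0$; (b) for each $r>0$, $\lim_n\sup_{x\in B_F(\rho,r)}d_E(x,V(G^n))=0$; (c) for every $x\in F$, $r,\varepsilon>0$, $\lim_n\mathbb{P}_\mu(|\beta(n)^{-1}\nu^n(B_E(x,r))-\nu(B_E(x,r))|>\varepsilon)=0$; (d) for every compact interval $I\subset(0,\infty)$, $x\in F$, $r,\varepsilon>0$, $\lim_n\mathbb{P}_\mu(\sup_{t\in I}|\mathbf{P}^{G^n}_\rho(X^n_{\lfloor\gamma(n)t\rfloor}\in B_E(x,r))-\int_{B_E(x,r)}q_t(y)\nu(dy)|>\varepsilon)=0$.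 Assumption (A2R): for every compact interval $I\subset(0,\infty)$ and $r,\varepsilon>0$, \[\lim_{\delta\to0}\limsup_{n\to\infty}\mathbb{P}_\mu\Big(\sup_{\substack{x,y\in B_{G^n}(\rho,\alpha(n)r):\\ d_{G^n}(x,y)\le\alpha(n)\delta}}\sup_{t\in I}\beta(n)\big|q^n_{\lfloor\gamma(n)t\rfloor}(x)-q^n_{\lfloor\gamma(n)t\rfloor}(y)\big|>\varepsilon\Big)=0.\] Assumption (A3R): $(F,d_F)$ has the midpoint property (for all $x,y\in F$ there is $z\in F$ with $d_F(x,z)=\frac12d_F(x,y)=d_F(z,y)$); (a) $\lim_{t\to\infty}\sup_{x\in F}q_t(x)=0$ and $\lim_{r\to\infty}\sup_{x\in F\setminus B_F(\rho,r)}\sup_{t\in I}q_t(x)=0$ for every compact interval $I\subset(0,\infty)$; (b) for every $\varepsilon>0$, $\lim_{t\to\infty}\limsup_n\mathbb{P}_\mu(\sup_{x\in V(G^n)}\beta(n)q^n_{\lfloor\gamma(n)t\rfloor}(x)>\varepsilon)=0$, and for every compact interval $I\subset(0,\infty)$ and $\varepsilon>0$, $\lim_{r\to\infty}\limsup_n\mathbb{P}_\mu(\sup_{x\in V(G^n)\setminus B_{G^n}(\rho,\alpha(n)r)}\sup_{t\in I}\beta(n)q^n_{\lfloor\gamma(n)t\rfloor}(x)>\varepsilon)=0$. *)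

theory Defs
  imports "HOL-Probability.Probability" "HOL-Library.Landau_Symbols"
begin

text \<open>Edge weights: a symmetric function on pairs of points of E
  (weight of the edge {x,y}, shared by all graphs containing that edge).\<close>
type_synonym 'e wts = "'e \<Rightarrow> 'e \<Rightarrow> real"

definition gdist :: "('e \<Rightarrow> 'e \<Rightarrow> bool) \<Rightarrow> 'e \<Rightarrow> 'e \<Rightarrow> nat" where
  "gdist A x y = (LEAST k. (A ^^ k) x y)"

definition gball :: "'e set \<Rightarrow> ('e \<Rightarrow> 'e \<Rightarrow> bool) \<Rightarrow> 'e \<Rightarrow> real \<Rightarrow> 'e set" where
  "gball V A x r = {y \<in> V. real (gdist A x y) < r}"

definition wdeg :: "'e wts \<Rightarrow> ('e \<Rightarrow> 'e \<Rightarrow> bool) \<Rightarrow> 'e \<Rightarrow> real" where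
  "wdeg w A x = (\<Sum>y\<in>{y. A x y}. w x y)"

definition gmeas :: "'e wts \<Rightarrow> ('e \<Rightarrow> 'e \<Rightarrow> bool) \<Rightarrow> 'e set \<Rightarrow> 'e set \<Rightarrow> real" where
  "gmeas w A V S = (\<Sum>x\<in>S \<inter> V. wdeg w A x)"

text \<open>hitp w A m x S = P_x(X_m in S) for the random walk with transition
  probabilities P(x,z) = mu_xz / mu_x.\<close>
primrec hitp :: "'e wts \<Rightarrow> ('e \<Rightarrow> 'e \<Rightarrow> bool) \<Rightarrow> nat \<Rightarrow> 'e \<Rightarrow> 'e set \<Rightarrow> real" where
  "hitp w A 0 x S = (if x \<in> S then 1 else 0)"
| "hitp w A (Suc m) x S = (\<Sum>z\<in>{z. A x z}. (w x z / wdeg w A x) * hitp w A m z S)"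

definition hk :: "'e wts \<Rightarrow> ('e \<Rightarrow> 'e \<Rightarrow> bool) \<Rightarrow> nat \<Rightarrow> 'e \<Rightarrow> 'e \<Rightarrow> real" where
  "hk w A m x y = hitp w A m x {y} / wdeg w A y"

definition qk :: "'e wts \<Rightarrow> ('e \<Rightarrow> 'e \<Rightarrow> bool) \<Rightarrow> nat \<Rightarrow> 'e \<Rightarrow> 'e \<Rightarrow> real" where
  "qk w A m x y = (hk w A m x y + hk w A (Suc m) x y) / 2"

text \<open>Outer probability (events are not assumed measurable).\<close>
definition outer_prob :: "'a measure \<Rightarrow> 'a set \<Rightarrow> real" where
  "outer_prob M A = (INF B \<in> {B \<in> sets M. A \<inter> space M \<subseteq> B}. measure M B)"

definition midpoint_property :: "'e::metric_space set \<Rightarrow> bool" where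
  "midpoint_property F \<longleftrightarrow>
     (\<forall>x\<in>F. \<forall>y\<in>F. \<exists>z\<in>F. dist x z = dist x y / 2 \<and> dist z y = dist x y / 2)"

end

theory Submission
  imports Defs
begin

lemma op_nonneg: "prob_space M \<Longrightarrow> outer_prob M A \<ge> 0"
  unfolding outer_prob_def
  by (rule cINF_greatest) (auto intro: exI[of _ "space M"])

lemma op_bdd: "bdd_below ((\<lambda>B. measure M B) ` {B \<in> sets M. A \<inter> space M \<subseteq> B})"
  by (rule bdd_belowI[of _ 0]) auto

lemma op_ne: "{B \<in> sets M. A \<inter> space M \<subseteq> B} \<noteq> {}"
  by auto

lemma op_mono: assumes "A \<inter> space M \<subseteq> B \<inter> space M"
  shows "outer_prob M A \<le> outer_prob M B"
  unfolding outer_prob_def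
proof (rule cINF_mono[OF op_ne op_bdd])
  fix C assume "C \<in> {B' \<in> sets M. B \<inter> space M \<subseteq> B'}"
  then show "\<exists>m\<in>{B \<in> sets M. A \<inter> space M \<subseteq> B}. measure M m \<le> measure M C"
    using assms by (intro bexI[of _ C]) auto
qed

lemma op_un: assumes "prob_space M"
  shows "outer_prob M (A \<union> B) \<le> outer_prob M A + outer_prob M B"
proof (rule field_le_epsilon)
  fix e :: real assume e: "e > 0"
  have "\<exists>C\<in>{C \<in> sets M. A \<inter> space M \<subseteq> C}. measure M C < outer_prob M A + e/2"
    unfolding outer_prob_def using e by (subst cINF_less_iff[OF op_ne op_bdd, symmetric]) auto
  then obtain C1 where C1: "C1 \<in> sets M" "A \<inter> space M \<subseteq> C1" "measure M C1 < outer_prob M A + e/2" by auto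
  have "\<exists>C\<in>{C \<in> sets M. B \<inter> space M \<subseteq> C}. measure M C < outer_prob M B + e/2"
    unfolding outer_prob_def using e by (subst cINF_less_iff[OF op_ne op_bdd, symmetric]) auto
  then obtain C2 where C2: "C2 \<in> sets M" "B \<inter> space M \<subseteq> C2" "measure M C2 < outer_prob M B + e/2" by auto
  have "outer_prob M (A \<union> B) \<le> measure M (C1 \<union> C2)"
    unfolding outer_prob_def using C1 C2 by (intro cINF_lower[OF op_bdd]) auto
  also have "\<dots> \<le> measure M C1 + measure M C2"
    using C1 C2 by (intro measure_Un_le) auto
  finally show "outer_prob M (A \<union> B) \<le> outer_prob M A + outer_prob M B + e" using C1 C2 by simp
qed

lemma op_UN: assumes "prob_space M" "finite I"
  shows "outer_prob M (\<Union>i\<in>I. A i) \<le> (\<Sum>i\<in>I. outer_prob M (A i))"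
  using assms(2)
proof (induction I rule: finite_induct)
  case empty
  have "outer_prob M {} \<le> measure M {}"
    unfolding outer_prob_def by (intro cINF_lower[OF op_bdd]) auto
  then show ?case by simp
next
  case (insert x F)
  have "outer_prob M (\<Union>i\<in>insert x F. A i) = outer_prob M (A x \<union> (\<Union>i\<in>F. A i))" by simp
  also have "\<dots> \<le> outer_prob M (A x) + outer_prob M (\<Union>i\<in>F. A i)" by (rule op_un[OF assms(1)])
  finally show ?case using insert by simp
qed

lemma reach_finite:
  fixes R :: "'a \<Rightarrow> 'a \<Rightarrow> bool"
  assumes "\<forall>x. finite {y. R x y}"
  shows "finite {y. (R ^^ k) x y}"
proof (induction k)
  case 0
  have "{y. (R ^^ 0) x y} = {x}" by (auto elim: relpowp_0_E intro: relpowp_0_I)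
  then show ?case by simp
next
  case (Suc k)
  have "{y. (R ^^ Suc k) x y} = (\<Union>z\<in>{z. (R ^^ k) x z}. {y. R z y})"
    by (auto simp: relpowp_Suc_right)
  then show ?case using Suc assms by simp
qed

lemma gdist_le: assumes "(R ^^ k) x y"
  shows "gdist R x y \<le> k" "(R ^^ gdist R x y) x y"
  unfolding gdist_def using assms by (auto intro: Least_le LeastI)

lemma gball_finite:
  assumes "\<forall>x. finite {y. R x y}" "\<forall>y\<in>V. \<exists>k. (R ^^ k) x y"
  shows "finite {y\<in>V. real (gdist R x y) \<le> K}"
proof -
  have "{y\<in>V. real (gdist R x y) \<le> K} \<subseteq> (\<Union>k\<in>{..nat \<lceil>K\<rceil>}. {y. (R ^^ k) x y})"
  proof
    fix y assume y: "y \<in> {y\<in>V. real (gdist R x y) \<le> K}"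
    then obtain k where "(R ^^ k) x y" using assms(2) by auto
    then have "(R ^^ gdist R x y) x y" by (rule gdist_le)
    moreover have "gdist R x y \<le> nat \<lceil>K\<rceil>"
    proof -
      have "real (gdist R x y) \<le> K" using y by simp
      then have "int (gdist R x y) \<le> \<lceil>K\<rceil>" by (simp add: le_ceiling_iff)
      then show ?thesis by linarith
    qed
    ultimately show "y \<in> (\<Union>k\<in>{..nat \<lceil>K\<rceil>}. {y. (R ^^ k) x y})" by blast
  qed
  moreover have "finite (\<Union>k\<in>{..nat \<lceil>K\<rceil>}. {y. (R ^^ k) x y})"
    using reach_finite[OF assms(1)] by auto
  ultimately show ?thesis by (rule finite_subset)
qed

lemma has_nbr:
  assumes "x \<in> V" "\<exists>a\<in>V. \<exists>b\<in>V. a \<noteq> b" "\<forall>a\<in>V. \<forall>b\<in>V. \<exists>k. (R ^^ k) a b"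
  shows "\<exists>z. R x z"
proof -
  obtain y where y: "y \<in> V" "y \<noteq> x" using assms(2) by metis
  then obtain k where k: "(R ^^ k) x y" using assms by blast
  show ?thesis
  proof (cases k)
    case 0 then show ?thesis using k y by simp
  next
    case (Suc j) then show ?thesis using k relpowp_Suc_D2 by metis
  qed
qed

lemma wdeg_nonneg: "(\<forall>z. R x z \<longrightarrow> w x z > 0) \<Longrightarrow> wdeg w R x \<ge> 0"
  unfolding wdeg_def by (rule sum_nonneg) auto

lemma wdeg_pos: "finite {z. R x z} \<Longrightarrow> \<exists>z. R x z \<Longrightarrow> (\<forall>z. R x z \<longrightarrow> w x z > 0) \<Longrightarrow> wdeg w R x > 0"
  unfolding wdeg_def by (rule sum_pos) auto

lemma hitp_nonneg:
  assumes "\<forall>x z. R x z \<longrightarrow> w x z > 0"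
  shows "hitp w R m x S \<ge> 0"
proof (induction m arbitrary: x)
  case 0 then show ?case by simp
next
  case (Suc m)
  have "0 \<le> wdeg w R x" using assms by (intro wdeg_nonneg) auto
  then show ?case unfolding hitp.simps using Suc assms
    by (intro sum_nonneg mult_nonneg_nonneg divide_nonneg_nonneg) (auto intro: less_imp_le)
qed

lemma hitp_sum:
  assumes "\<forall>x y. R x y \<longrightarrow> x \<in> V \<and> y \<in> V" "x \<in> V" "finite (S \<inter> V)"
  shows "hitp w R m x S = (\<Sum>v\<in>S \<inter> V. hitp w R m x {v})"
  using assms(2)
proof (induction m arbitrary: x)
  case 0
  have "(\<Sum>v\<in>S \<inter> V. hitp w R 0 x {v}) = (\<Sum>v\<in>S \<inter> V. if x = v then 1 else 0)"
    by (intro sum.cong) auto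
  also have "\<dots> = (if x \<in> S \<inter> V then 1 else 0)" using assms(3) by simp
  finally show ?case using 0 by simp
next
  case (Suc m)
  have "hitp w R (Suc m) x S = (\<Sum>z\<in>{z. R x z}. (w x z / wdeg w R x) * hitp w R m z S)"
    by simp
  also have "\<dots> = (\<Sum>z\<in>{z. R x z}. (w x z / wdeg w R x) * (\<Sum>v\<in>S \<inter> V. hitp w R m z {v}))"
    using Suc assms(1) by (intro sum.cong refl) auto
  also have "\<dots> = (\<Sum>z\<in>{z. R x z}. \<Sum>v\<in>S \<inter> V. (w x z / wdeg w R x) * hitp w R m z {v})"
    by (simp add: sum_distrib_left)
  also have "\<dots> = (\<Sum>v\<in>S \<inter> V. \<Sum>z\<in>{z. R x z}. (w x z / wdeg w R x) * hitp w R m z {v})"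
    by (rule sum.swap)
  finally show ?case by simp
qed

lemma hitp_last:
  assumes sym: "\<forall>x y. R x y \<longrightarrow> R y x" and fin: "\<forall>x. finite {y. R x y}"
  shows "hitp w R (Suc m) y {x} = (\<Sum>z\<in>{z. R x z}. hitp w R m y {z} * (w z x / wdeg w R z))"
proof (induction m arbitrary: y)
  case 0
  have "hitp w R (Suc 0) y {x} = (\<Sum>z\<in>{z. R y z}. if z = x then w y z / wdeg w R y else 0)"
    by (simp, intro sum.cong) auto
  also have "\<dots> = (if R y x then w y x / wdeg w R y else 0)"
    using fin by (simp add: sum.delta)
  also have "\<dots> = (\<Sum>z\<in>{z. R x z}. if y = z then w z x / wdeg w R z else 0)"
    using sym fin by (auto simp add: sum.delta')
  also have "\<dots> = (\<Sum>z\<in>{z. R x z}. hitp w R 0 y {z} * (w z x / wdeg w R z))"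
    by (intro sum.cong) auto
  finally show ?case .
next
  case (Suc m)
  have "hitp w R (Suc (Suc m)) y {x} = (\<Sum>u\<in>{u. R y u}. (w y u / wdeg w R y) *
          (\<Sum>z\<in>{z. R x z}. hitp w R m u {z} * (w z x / wdeg w R z)))"
    using Suc by (simp only: hitp.simps)
  also have "\<dots> = (\<Sum>u\<in>{u. R y u}. \<Sum>z\<in>{z. R x z}. (w y u / wdeg w R y) * hitp w R m u {z} * (w z x / wdeg w R z))"
    by (simp add: sum_distrib_left mult.assoc)
  also have "\<dots> = (\<Sum>z\<in>{z. R x z}. \<Sum>u\<in>{u. R y u}. (w y u / wdeg w R y) * hitp w R m u {z} * (w z x / wdeg w R z))"
    by (rule sum.swap)
  also have "\<dots> = (\<Sum>z\<in>{z. R x z}. (\<Sum>u\<in>{u. R y u}. (w y u / wdeg w R y) * hitp w R m u {z}) * (w z x / wdeg w R z))"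
    by (simp only: sum_distrib_right)
  also have "\<dots> = (\<Sum>z\<in>{z. R x z}. hitp w R (Suc m) y {z} * (w z x / wdeg w R z))"
    by (simp only: hitp.simps)
  finally show ?case .
qed

lemma hk_step:
  assumes sym: "\<forall>x y. R x y \<longrightarrow> R y x" and fin: "\<forall>x. finite {y. R x y}"
    and wsym: "\<forall>x z. R x z \<longrightarrow> w x z = w z x"
  shows "hk w R (Suc m) y x = (\<Sum>z\<in>{z. R x z}. (w x z / wdeg w R x) * hk w R m y z)"
proof -
  have "hk w R (Suc m) y x = (\<Sum>z\<in>{z. R x z}. hitp w R m y {z} * (w z x / wdeg w R z)) / wdeg w R x"
    unfolding hk_def using hitp_last[OF sym fin] by simp
  also have "\<dots> = (\<Sum>z\<in>{z. R x z}. hitp w R m y {z} * (w z x / wdeg w R z) / wdeg w R x)"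
    by (rule sum_divide_distrib)
  also have "\<dots> = (\<Sum>z\<in>{z. R x z}. (w x z / wdeg w R x) * hk w R m y z)"
    unfolding hk_def using wsym by (intro sum.cong refl) (auto simp: ac_simps)
  finally show ?thesis .
qed

lemma qk_step:
  assumes sym: "\<forall>x y. R x y \<longrightarrow> R y x" and fin: "\<forall>x. finite {y. R x y}"
    and wsym: "\<forall>x z. R x z \<longrightarrow> w x z = w z x"
  shows "qk w R (Suc m) y x = (\<Sum>z\<in>{z. R x z}. (w x z / wdeg w R x) * qk w R m y z)"
proof -
  have "qk w R (Suc m) y x = (hk w R (Suc m) y x + hk w R (Suc (Suc m)) y x) / 2"
    unfolding qk_def ..
  also have "\<dots> = ((\<Sum>z\<in>{z. R x z}. (w x z / wdeg w R x) * hk w R m y z) +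
     (\<Sum>z\<in>{z. R x z}. (w x z / wdeg w R x) * hk w R (Suc m) y z)) / 2"
    using hk_step[OF assms, of m] hk_step[OF assms, of "Suc m"] by simp
  also have "\<dots> = (\<Sum>z\<in>{z. R x z}. (w x z / wdeg w R x) * ((hk w R m y z + hk w R (Suc m) y z) / 2))"
    by (simp add: sum.distrib[symmetric] sum_divide_distrib distrib_left)
  finally show ?thesis unfolding qk_def .
qed

lemma qk_nonneg:
  assumes "\<forall>x z. R x z \<longrightarrow> w x z > 0"
  shows "qk w R m y x \<ge> 0"
proof -
  have "hk w R k y x \<ge> 0" for k
    unfolding hk_def using assms by (intro divide_nonneg_nonneg hitp_nonneg wdeg_nonneg) auto
  then show ?thesis unfolding qk_def by simp
qed

lemma qk_mono:
  assumes edges: "\<forall>x y. R x y \<longrightarrow> x \<in> V \<and> y \<in> V"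
    and sym: "\<forall>x y. R x y \<longrightarrow> R y x" and fin: "\<forall>x. finite {y. R x y}"
    and wpos: "\<forall>x z. R x z \<longrightarrow> 0 < w x z \<and> w x z = w z x"
    and nbr: "\<forall>x\<in>V. \<exists>z. R x z"
    and bound: "\<forall>v\<in>V. qk w R m y v \<le> c"
  shows "\<forall>v\<in>V. qk w R (m + j) y v \<le> c"
proof (induction j)
  case 0 then show ?case using bound by simp
next
  case (Suc j)
  show ?case
  proof
    fix x assume x: "x \<in> V"
    have wd: "wdeg w R x > 0" by (intro wdeg_pos) (use fin nbr x wpos in fastforce)+
    have "qk w R (m + Suc j) y x = (\<Sum>z\<in>{z. R x z}. (w x z / wdeg w R x) * qk w R (m + j) y z)"
    proof -
      have wsym: "\<forall>x z. R x z \<longrightarrow> w x z = w z x" using wpos by blast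
      show ?thesis using qk_step[OF sym fin wsym, of "m+j" y x] by simp
    qed
    also have "\<dots> \<le> (\<Sum>z\<in>{z. R x z}. (w x z / wdeg w R x) * c)"
      using Suc edges wpos wd by (intro sum_mono mult_left_mono) (auto, metis divide_nonneg_pos less_imp_le)
    also have "\<dots> = (\<Sum>z\<in>{z. R x z}. w x z) / wdeg w R x * c"
      by (simp add: sum_distrib_right sum_divide_distrib)
    also have "\<dots> = c" using wd unfolding wdeg_def by simp
    finally show "qk w R (m + Suc j) y x \<le> c" .
  qed
qed

lemma F_closed:
  fixes F :: "'e::metric_space set"
  assumes "\<forall>x r. r > 0 \<longrightarrow> compact (F \<inter> cball x r)"
  shows "closed F"
  unfolding closed_sequential_limits
proof (intro allI impI)
  fix s l assume h: "(\<forall>n. s n \<in> F) \<and> s \<longlonglongrightarrow> l"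
  then have "eventually (\<lambda>n. dist (s n) l < 1) sequentially"
    by (intro tendstoD) auto
  then obtain N where N: "\<forall>n\<ge>N. dist (s n) l < 1" by (auto simp: eventually_sequentially)
  have "closed (F \<inter> cball l 1)" using assms by (intro compact_imp_closed) auto
  moreover have "\<forall>n. s (n + N) \<in> F \<inter> cball l 1" using h N by (auto simp: dist_commute less_imp_le)
  moreover have "(\<lambda>n. s (n + N)) \<longlonglongrightarrow> l" using h by (intro LIMSEQ_ignore_initial_segment) auto
  ultimately have "l \<in> F \<inter> cball l 1" by (metis closed_sequentially)
  then show "l \<in> F" by simp
qed

lemma q_unif:
  fixes F :: "'e::metric_space set" and q :: "real \<Rightarrow> 'e \<Rightarrow> real"
  assumes cont: "continuous_on ({0<..} \<times> F) (\<lambda>(t, x). q t x)"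
    and cpt: "compact K" and KF: "K \<subseteq> F" and a: "0 < a" and e: "e > 0"
  shows "\<exists>d>0. \<forall>s t x y. s \<in> {a..b} \<and> t \<in> {a..b} \<and> x \<in> K \<and> y \<in> K \<and> \<bar>s - t\<bar> < d \<and> dist x y < d
     \<longrightarrow> \<bar>q s x - q t y\<bar> < e"
proof -
  have c2: "continuous_on ({a..b} \<times> K) (\<lambda>(t, x). q t x)"
    by (rule continuous_on_subset[OF cont]) (use a KF in auto)
  have "uniformly_continuous_on ({a..b} \<times> K) (\<lambda>(t, x). q t x)"
    by (rule compact_uniformly_continuous[OF c2]) (intro compact_Times compact_Icc cpt)
  then obtain d where d: "d > 0" "\<forall>p\<in>{a..b} \<times> K. \<forall>p'\<in>{a..b} \<times> K. dist p' p < d \<longrightarrow>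
      dist ((\<lambda>(t, x). q t x) p') ((\<lambda>(t, x). q t x) p) < e"
    unfolding uniformly_continuous_on_def using e by blast
  show ?thesis
  proof (intro exI[of _ "d/2"] conjI allI impI)
    fix s t x y assume h: "s \<in> {a..b} \<and> t \<in> {a..b} \<and> x \<in> K \<and> y \<in> K \<and> \<bar>s - t\<bar> < d/2 \<and> dist x y < d/2"
    have "dist (s, x) (t, y) < d" unfolding dist_Pair_Pair
      using h by (intro sqrt_sum_squares_half_less) (auto simp: dist_real_def)
    then have "dist (q s x) (q t y) < e" using d(2)[rule_format, of "(t,y)" "(s,x)"] h by auto
    then show "\<bar>q s x - q t y\<bar> < e" by (simp add: dist_real_def)
  qed (use d in auto)
qed

lemma q_bdd:
  fixes F :: "'e::metric_space set" and q :: "real \<Rightarrow> 'e \<Rightarrow> real"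
  assumes cont: "continuous_on ({0<..} \<times> F) (\<lambda>(t, x). q t x)"
    and cpt: "compact K" and KF: "K \<subseteq> F" and a: "0 < a"
  shows "\<exists>B. \<forall>t x. t \<in> {a..b} \<and> x \<in> K \<longrightarrow> \<bar>q t x\<bar> \<le> B"
proof -
  have c2: "continuous_on ({a..b} \<times> K) (\<lambda>(t, x). q t x)"
    by (rule continuous_on_subset[OF cont]) (use a KF in auto)
  have "compact ((\<lambda>(t, x). q t x) ` ({a..b} \<times> K))"
    by (rule compact_continuous_image[OF c2]) (intro compact_Times compact_Icc cpt)
  then have "bounded ((\<lambda>(t, x). q t x) ` ({a..b} \<times> K))" by (rule compact_imp_bounded)
  then obtain B where "\<forall>z\<in>(\<lambda>(t, x). q t x) ` ({a..b} \<times> K). norm z \<le> B"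
    unfolding bounded_iff by blast
  then show ?thesis by (intro exI[of _ B]) auto
qed

lemma int_bounds:
  fixes f :: "'e \<Rightarrow> real"
  assumes S: "S \<in> sets \<nu>" and fin: "emeasure \<nu> S < \<infinity>"
    and U: "\<forall>y\<in>S. f y \<le> U" "0 \<le> U" and L: "\<forall>y\<in>S. L \<le> f y"
  shows "enn2real (\<integral>\<^sup>+y\<in>S. ennreal (f y) \<partial>\<nu>) \<le> measure \<nu> S * U"
    and "measure \<nu> S * L \<le> enn2real (\<integral>\<^sup>+y\<in>S. ennreal (f y) \<partial>\<nu>)"
proof -
  have em: "emeasure \<nu> S = ennreal (measure \<nu> S)" using fin by (intro emeasure_eq_ennreal_measure) auto
  have "(\<integral>\<^sup>+y\<in>S. ennreal (f y) \<partial>\<nu>) \<le> (\<integral>\<^sup>+y. ennreal U * indicator S y \<partial>\<nu>)"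
    using U by (intro nn_integral_mono) (auto simp: indicator_def)
  also have "\<dots> = ennreal U * emeasure \<nu> S" using S by (rule nn_integral_cmult_indicator)
  also have "\<dots> = ennreal (measure \<nu> S * U)" using em U by (simp add: ennreal_mult mult.commute)
  finally have up: "(\<integral>\<^sup>+y\<in>S. ennreal (f y) \<partial>\<nu>) \<le> ennreal (measure \<nu> S * U)" .
  show "enn2real (\<integral>\<^sup>+y\<in>S. ennreal (f y) \<partial>\<nu>) \<le> measure \<nu> S * U"
    using enn2real_mono[OF up] U by simp
  show "measure \<nu> S * L \<le> enn2real (\<integral>\<^sup>+y\<in>S. ennreal (f y) \<partial>\<nu>)"
  proof (cases "L \<le> 0")
    case True then show ?thesis by (metis enn2real_nonneg measure_nonneg mult_nonneg_nonpos order_trans)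
  next
    case False
    have "ennreal (measure \<nu> S * L) = ennreal L * emeasure \<nu> S"
      using em False by (simp add: ennreal_mult mult.commute)
    also have "\<dots> = (\<integral>\<^sup>+y. ennreal L * indicator S y \<partial>\<nu>)" using S by (rule nn_integral_cmult_indicator[symmetric])
    also have "\<dots> \<le> (\<integral>\<^sup>+y\<in>S. ennreal (f y) \<partial>\<nu>)"
      using L by (intro nn_integral_mono) (auto simp: indicator_def intro: ennreal_leI)
    finally have lo: "ennreal (measure \<nu> S * L) \<le> (\<integral>\<^sup>+y\<in>S. ennreal (f y) \<partial>\<nu>)" .
    have "enn2real (ennreal (measure \<nu> S * L)) \<le> enn2real (\<integral>\<^sup>+y\<in>S. ennreal (f y) \<partial>\<nu>)"
      by (rule enn2real_mono[OF lo le_less_trans[OF up ennreal_less_top]])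
    then show ?thesis using False by simp
  qed
qed

lemma arith_core:
  fixes \<beta> c \<mu> qx Qm \<epsilon> Gx N Q e1 e2 h1 h2 I1 I2 :: real
  assumes bp: "\<beta> > 0" and cp: "c > 0" and muc: "\<mu> \<ge> c" and q0: "0 \<le> qx" and qQ: "qx \<le> Qm"
    and ep: "\<epsilon> > 0"
    and hG: "\<bar>Gx * N - \<beta> * Q\<bar> \<le> \<epsilon>/4 * N"
    and hN: "\<bar>N / \<beta> - \<mu>\<bar> \<le> e1" and e1a: "e1 \<le> c/2" and e1b: "e1 * (Qm + 1) \<le> c * \<epsilon> / 32"
    and e2b: "e2 \<le> c * \<epsilon> / 32"
    and hQ: "Q = (h1 + h2) / 2" and h1: "\<bar>h1 - I1\<bar> \<le> e2" and h2: "\<bar>h2 - I2\<bar> \<le> e2"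
    and I1: "\<mu> * (qx - \<epsilon>/8) \<le> I1" "I1 \<le> \<mu> * (qx + \<epsilon>/8)"
    and I2: "\<mu> * (qx - \<epsilon>/8) \<le> I2" "I2 \<le> \<mu> * (qx + \<epsilon>/8)"
  shows "\<bar>Gx - qx\<bar> \<le> 5/8 * \<epsilon>"
proof -
  define Nb where "Nb = N / \<beta>"
  have e10: "e1 \<ge> 0" using hN by linarith
  have Nbge: "Nb \<ge> \<mu> / 2" using hN e1a muc unfolding Nb_def by linarith
  have mup: "\<mu> > 0" using muc cp by linarith
  have Nbp: "Nb > 0" using Nbge mup by linarith
  have NN: "N = \<beta> * Nb" using bp unfolding Nb_def by simp
  have "\<bar>Gx * N - \<beta> * Q\<bar> = \<beta> * Nb * \<bar>Gx - Q / Nb\<bar>"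
  proof -
    have "Gx * N - \<beta> * Q = \<beta> * Nb * (Gx - Q / Nb)" using NN Nbp by (simp add: field_simps)
    then show ?thesis using bp Nbp by (simp add: abs_mult)
  qed
  then have "\<beta> * Nb * \<bar>Gx - Q / Nb\<bar> \<le> \<beta> * Nb * (\<epsilon>/4)" using hG NN by (simp add: mult.commute)
  then have s1: "\<bar>Gx - Q / Nb\<bar> \<le> \<epsilon>/4" using bp Nbp by (simp add: mult_le_cancel_left_pos)
  have s2: "\<bar>Q - qx * \<mu>\<bar> \<le> e2 + \<mu> * \<epsilon>/8"
    using hQ h1 h2 I1 I2 by (simp add: abs_le_iff algebra_simps)
  have "\<bar>qx * (\<mu> - Nb)\<bar> \<le> Qm * e1"
  proof -
    have "\<bar>qx * (\<mu> - Nb)\<bar> = qx * \<bar>\<mu> - Nb\<bar>" using q0 by (simp add: abs_mult)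
    also have "\<dots> \<le> Qm * e1" using q0 qQ hN unfolding Nb_def
      by (intro mult_mono) (auto simp: abs_minus_commute)
    finally show ?thesis .
  qed
  then have s3: "\<bar>Q - qx * Nb\<bar> \<le> e2 + Qm * e1 + \<mu> * \<epsilon>/8"
    using s2 by (simp add: abs_le_iff algebra_simps)
  have "Q / Nb - qx = (Q - qx * Nb) / Nb" using Nbp by (simp add: diff_divide_distrib)
  then have "\<bar>Q / Nb - qx\<bar> = \<bar>Q - qx * Nb\<bar> / Nb" using Nbp by (simp add: abs_divide)
  also have "\<dots> \<le> (e2 + Qm * e1 + \<mu> * \<epsilon>/8) / Nb" using s3 Nbp by (simp add: divide_right_mono)
  also have "\<dots> = (e2 + Qm * e1) / Nb + (\<mu> * \<epsilon>/8) / Nb" by (simp add: add_divide_distrib)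
  also have "(e2 + Qm * e1) / Nb \<le> \<epsilon>/8"
  proof -
    have "Qm * e1 \<le> c * \<epsilon> / 32" using e1b e10 by (smt (verit) mult_nonneg_nonneg distrib_left mult.commute)
    then have "e2 + Qm * e1 \<le> (c/2) * (\<epsilon>/8)" using e2b by simp
    also have "\<dots> \<le> Nb * (\<epsilon>/8)" using Nbge muc ep by (intro mult_right_mono) auto
    finally show ?thesis using Nbp by (simp add: divide_le_eq mult.commute)
  qed
  also have "(\<mu> * \<epsilon>/8) / Nb \<le> \<epsilon>/4"
  proof -
    have "\<mu> * \<epsilon>/8 \<le> Nb * (\<epsilon>/4)" using Nbge ep by (simp add: field_simps)
    then show ?thesis using Nbp by (simp add: divide_le_eq) (simp add: ac_simps)
  qed
  finally have "\<bar>Q / Nb - qx\<bar> \<le> \<epsilon>/8 + \<epsilon>/4" by simp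
  then show ?thesis using s1 by linarith
qed

locale setting =

  fixes F :: "'e::metric_space set" and \<rho> :: 'e and \<nu> :: "'e measure"
    and q :: "real \<Rightarrow> 'e \<Rightarrow> real"
    and V :: "nat \<Rightarrow> 'e set" and adj :: "nat \<Rightarrow> 'e \<Rightarrow> 'e \<Rightarrow> bool"
    and M :: "('e \<Rightarrow> 'e \<Rightarrow> real) measure"
    and \<alpha> \<beta> \<gamma> :: "nat \<Rightarrow> real" and g :: "nat \<Rightarrow> 'e \<Rightarrow> 'e"
    and T1 \<epsilon> :: real
  assumes F_proper: "\<forall>x r. r > 0 \<longrightarrow> compact (F \<inter> cball x r)"
    and rho_F: "\<rho> \<in> F"
    and nu_sets: "sets \<nu> = sets borel"
    and nu_ext: "emeasure \<nu> (UNIV - F) = 0"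
    and nu_lfin: "\<forall>K. compact K \<and> K \<subseteq> F \<longrightarrow> emeasure \<nu> K < \<infinity>"
    and nu_inner: "\<forall>A\<in>sets borel. emeasure \<nu> A = (SUP K\<in>{K. compact K \<and> K \<subseteq> A \<inter> F}. emeasure \<nu> K)"
    and nu_supp: "\<forall>x\<in>F. \<forall>r>0. emeasure \<nu> (ball x r) > 0"
    and q_cont: "continuous_on ({0<..} \<times> F) (\<lambda>(t, x). q t x)"
    and q_nonneg: "\<forall>t>0. \<forall>x\<in>F. q t x \<ge> 0"
    and q_int: "\<forall>t>0. (\<integral>\<^sup>+x\<in>F. ennreal (q t x) \<partial>\<nu>) = 1"
    and G_edges: "\<forall>n x y. adj n x y \<longrightarrow> x \<in> V n \<and> y \<in> V n"
    and G_sym: "\<forall>n x y. adj n x y \<longrightarrow> adj n y x"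
    and G_irrefl: "\<forall>n x. \<not> adj n x x"
    and G_locfin: "\<forall>n x. finite {y. adj n x y}"
    and G_conn: "\<forall>n. \<forall>x\<in>V n. \<forall>y\<in>V n. \<exists>k. (adj n ^^ k) x y"
    and G_two: "\<forall>n. \<exists>x\<in>V n. \<exists>y\<in>V n. x \<noteq> y"
    and G_root: "\<forall>n. \<rho> \<in> V n"
    and M_prob: "prob_space M"
    and M_wts: "\<forall>w\<in>space M. \<forall>n x y. adj n x y \<longrightarrow> 0 < w x y \<and> w x y = w y x"
    and \<alpha>_nonneg: "\<forall>n. \<alpha> n \<ge> 0" and \<beta>_nonneg: "\<forall>n. \<beta> n \<ge> 0" and \<gamma>_nonneg: "\<forall>n. \<gamma> n \<ge> 0"
    and \<alpha>_lim: "filterlim \<alpha> at_top sequentially"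
    and \<beta>_lim: "filterlim \<beta> at_top sequentially"
    and \<gamma>_lim: "filterlim \<gamma> at_top sequentially"
    and g_def: "\<forall>n x. g n x \<in> V n \<and> (\<forall>v\<in>V n. dist x (g n x) \<le> dist x v)"
    and A1a1: "\<exists>c1>0. \<forall>n. \<forall>x\<in>V n. \<forall>y\<in>V n. real (gdist (adj n) x y) \<ge> c1 * \<alpha> n * dist x y"
    and A1a2: "\<exists>\<alpha>t :: nat \<Rightarrow> real. (\<forall>n. \<alpha>t n \<ge> 0) \<and> \<alpha>t \<in> o(\<alpha>) \<and>
       (\<forall>r>0. \<exists>c2. \<exists>n0. \<forall>n\<ge>n0. \<forall>x\<in>V n \<inter> ball \<rho> r. \<forall>y\<in>V n \<inter> ball \<rho> r.
          real (gdist (adj n) x y) \<le> c2 * \<alpha> n * dist x y + \<alpha>t n)"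
    and A1b: "\<forall>r>0. (\<lambda>n. SUP x\<in>ball \<rho> r \<inter> F. ennreal (infdist x (V n))) \<longlonglongrightarrow> 0"
    and A1c: "\<forall>x\<in>F. \<forall>r>0. \<forall>e>0. (\<lambda>n. outer_prob M
        {w. \<bar>gmeas w (adj n) (V n) (ball x r) / \<beta> n - measure \<nu> (ball x r)\<bar> > e}) \<longlonglongrightarrow> 0"
    and A1d: "\<forall>a b. 0 < a \<and> a \<le> b \<longrightarrow> (\<forall>x\<in>F. \<forall>r>0. \<forall>e>0. (\<lambda>n. outer_prob M
        {w. \<exists>t\<in>{a..b}. \<bar>hitp w (adj n) (nat \<lfloor>\<gamma> n * t\<rfloor>) \<rho> (ball x r)
             - enn2real (\<integral>\<^sup>+y\<in>ball x r \<inter> F. ennreal (q t y) \<partial>\<nu>)\<bar> > e}) \<longlonglongrightarrow> 0)"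
    and A2: "\<forall>a b. 0 < a \<and> a \<le> b \<longrightarrow> (\<forall>r>0. \<forall>e>0.
        ((\<lambda>\<delta>. limsup (\<lambda>n. ereal (outer_prob M
          {w. \<exists>x\<in>gball (V n) (adj n) \<rho> (\<alpha> n * r). \<exists>y\<in>gball (V n) (adj n) \<rho> (\<alpha> n * r).
                real (gdist (adj n) x y) \<le> \<alpha> n * \<delta> \<and>
                (\<exists>t\<in>{a..b}. \<beta> n * \<bar>qk w (adj n) (nat \<lfloor>\<gamma> n * t\<rfloor>) \<rho> x
                                   - qk w (adj n) (nat \<lfloor>\<gamma> n * t\<rfloor>) \<rho> y\<bar> > e)})))
         \<longlongrightarrow> 0) (at_right 0))"
    and A3_mid: "midpoint_property F"
    and A3a1: "((\<lambda>t. SUP x\<in>F. ennreal (q t x)) \<longlongrightarrow> 0) at_top"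
    and A3a2: "\<forall>a b. 0 < a \<and> a \<le> b \<longrightarrow>
        ((\<lambda>r. SUP x\<in>F - ball \<rho> r. SUP t\<in>{a..b}. ennreal (q t x)) \<longlongrightarrow> 0) at_top"
    and A3b1: "\<forall>e>0. ((\<lambda>t. limsup (\<lambda>n. ereal (outer_prob M
        {w. \<exists>x\<in>V n. \<beta> n * qk w (adj n) (nat \<lfloor>\<gamma> n * t\<rfloor>) \<rho> x > e}))) \<longlongrightarrow> 0) at_top"
    and A3b2: "\<forall>a b. 0 < a \<and> a \<le> b \<longrightarrow> (\<forall>e>0. ((\<lambda>r. limsup (\<lambda>n. ereal (outer_prob M
        {w. \<exists>x\<in>V n - gball (V n) (adj n) \<rho> (\<alpha> n * r). \<exists>t\<in>{a..b}.
              \<beta> n * qk w (adj n) (nat \<lfloor>\<gamma> n * t\<rfloor>) \<rho> x > e}))) \<longlongrightarrow> 0) at_top)"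
    and T1_pos: "T1 > 0"
    and eps_pos: "\<epsilon> > 0"

begin

lemma nbr: "x \<in> V n \<Longrightarrow> \<exists>z. adj n x z"
  using G_two G_conn by (intro has_nbr[of x "V n"]) auto

lemma wdeg_posM: "w \<in> space M \<Longrightarrow> x \<in> V n \<Longrightarrow> wdeg w (adj n) x > 0"
  using nbr[of x n] G_locfin M_wts by (intro wdeg_pos) fastforce+

lemma qk_nonnegM: "w \<in> space M \<Longrightarrow> qk w (adj n) m y x \<ge> 0"
  using M_wts by (intro qk_nonneg) auto

lemma qk_monoM:
  assumes w: "w \<in> space M" and b: "\<forall>v\<in>V n. qk w (adj n) m \<rho> v \<le> c" and mm: "m \<le> m'"
    and v: "v \<in> V n"
  shows "qk w (adj n) m' \<rho> v \<le> c"
proof -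
  have "\<forall>v\<in>V n. qk w (adj n) (m + (m' - m)) \<rho> v \<le> c"
    by (rule qk_mono[of "adj n" "V n"]) (use G_edges G_sym G_locfin M_wts w nbr b in fastforce)+
  then show ?thesis using mm v by simp
qed

lemma g_close: "dist x (g n x) \<le> infdist x (V n)"
proof -
  have "V n \<noteq> {}" using G_root by auto
  then show ?thesis unfolding infdist_def using g_def by (auto intro: cINF_greatest)
qed

lemma F_closed': "closed F" using F_proper by (rule F_closed)

lemma F_sets: "F \<in> sets \<nu>" using F_closed' nu_sets by auto

lemma ball_sets: "ball y d \<in> sets \<nu>" using nu_sets by auto

lemma coF_sets: "UNIV - F \<in> sets \<nu>" using F_closed' nu_sets by (auto intro!: borel_open)

lemma ball_fin: "emeasure \<nu> (ball y d) < \<infinity>"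
proof (cases "d > 0")
  case True
  have c: "F \<inter> cball y d \<in> sets \<nu>" using F_proper True nu_sets
    by (simp add: borel_compact)
  have "emeasure \<nu> (ball y d) \<le> emeasure \<nu> ((F \<inter> cball y d) \<union> (UNIV - F))"
    using c coF_sets by (intro emeasure_mono) auto
  also have "\<dots> \<le> emeasure \<nu> (F \<inter> cball y d) + emeasure \<nu> (UNIV - F)"
    using c coF_sets by (intro emeasure_subadditive) auto
  also have "\<dots> < \<infinity>" using nu_lfin F_proper True nu_ext
    by (simp add: compact_imp_closed)
  finally show ?thesis .
next
  case False then have e: "ball y d = {}" by auto
  show ?thesis by (simp only: e emeasure_empty) simp
qed

lemma ball_F: "emeasure \<nu> (ball y d \<inter> F) = emeasure \<nu> (ball y d)"
proof -
  have "UNIV - F \<in> null_sets \<nu>" using nu_ext coF_sets by auto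
  then have "emeasure \<nu> (ball y d - (UNIV - F)) = emeasure \<nu> (ball y d)"
    using ball_sets by (rule emeasure_Diff_null_set)
  moreover have "ball y d - (UNIV - F) = ball y d \<inter> F" by auto
  ultimately show ?thesis by simp
qed

lemma ball_emeq: "emeasure \<nu> (ball y d) = ennreal (measure \<nu> (ball y d))"
  by (rule emeasure_eq_ennreal_measure) (use ball_fin[of y d] in auto)

lemma ball_pos: "y \<in> F \<Longrightarrow> d > 0 \<Longrightarrow> measure \<nu> (ball y d) > 0"
  using nu_supp ball_emeq[of y d] by (metis ennreal_less_zero_iff)

end

lemma ennreal_less_real: "ennreal r < ennreal q \<Longrightarrow> 0 < q \<Longrightarrow> r < q"
  by (cases "r \<ge> 0") (auto simp: ennreal_less_iff)

lemma abs_big: "\<bar>(G::real) - Q\<bar> > e \<Longrightarrow> 0 \<le> G \<Longrightarrow> 0 \<le> Q \<Longrightarrow> Q < e/2 \<Longrightarrow> G > e/2"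
  by linarith

context setting begin

lemma m_mono: "T \<le> t \<Longrightarrow> nat \<lfloor>\<gamma> n * T\<rfloor> \<le> nat \<lfloor>\<gamma> n * t\<rfloor>"
  using \<gamma>_nonneg by (intro nat_mono floor_mono mult_left_mono) auto

lemma large_incl:
  assumes w: "w \<in> space M" and Tt: "T \<le> t" and T: "T > 0" and qs: "\<forall>s\<ge>T. \<forall>x\<in>F. q s x < \<epsilon>/2"
    and x: "x \<in> F"
    and big: "\<bar>\<beta> n * qk w (adj n) (nat \<lfloor>\<gamma> n * t\<rfloor>) \<rho> (g n x) - q t x\<bar> > \<epsilon>"
  shows "\<exists>v\<in>V n. \<beta> n * qk w (adj n) (nat \<lfloor>\<gamma> n * T\<rfloor>) \<rho> v > \<epsilon>/2"
proof (rule ccontr)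
  assume "\<not> ?thesis"
  then have b: "\<forall>v\<in>V n. \<beta> n * qk w (adj n) (nat \<lfloor>\<gamma> n * T\<rfloor>) \<rho> v \<le> \<epsilon>/2" by auto
  have G0: "0 \<le> \<beta> n * qk w (adj n) (nat \<lfloor>\<gamma> n * t\<rfloor>) \<rho> (g n x)"
    using \<beta>_nonneg qk_nonnegM[OF w] by simp
  have Gb: "\<beta> n * qk w (adj n) (nat \<lfloor>\<gamma> n * t\<rfloor>) \<rho> (g n x) > \<epsilon>/2"
    using abs_big[OF big G0] q_nonneg qs Tt T x by auto
  show False
  proof (cases "\<beta> n = 0")
    case True then show False using Gb eps_pos by simp
  next
    case False
    then have bp: "\<beta> n > 0" using \<beta>_nonneg by (simp add: order_less_le)
    have "\<forall>v\<in>V n. qk w (adj n) (nat \<lfloor>\<gamma> n * T\<rfloor>) \<rho> v \<le> (\<epsilon>/2) / \<beta> n"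
    proof
      fix v assume "v \<in> V n"
      then have "\<beta> n * qk w (adj n) (nat \<lfloor>\<gamma> n * T\<rfloor>) \<rho> v \<le> \<epsilon>/2" using b by auto
      then show "qk w (adj n) (nat \<lfloor>\<gamma> n * T\<rfloor>) \<rho> v \<le> (\<epsilon>/2) / \<beta> n"
        using bp by (simp add: pos_le_divide_eq mult.commute)
    qed
    then have "qk w (adj n) (nat \<lfloor>\<gamma> n * t\<rfloor>) \<rho> (g n x) \<le> (\<epsilon>/2) / \<beta> n"
      using g_def m_mono[OF Tt] by (intro qk_monoM[OF w]) auto
    then have "\<beta> n * qk w (adj n) (nat \<lfloor>\<gamma> n * t\<rfloor>) \<rho> (g n x) \<le> \<epsilon>/2"
      using bp by (simp add: pos_le_divide_eq mult.commute)
    then show False using Gb by simp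
  qed
qed

lemma large_t:
  assumes eta: "\<eta> > 0"
  shows "\<exists>T\<ge>T1. (\<forall>t\<ge>T. \<forall>x\<in>F. q t x < \<epsilon>/2) \<and>
     (\<exists>N. \<forall>n\<ge>N. outer_prob M {w. \<exists>x\<in>V n. \<beta> n * qk w (adj n) (nat \<lfloor>\<gamma> n * T\<rfloor>) \<rho> x > \<epsilon>/2} < \<eta>)"
proof -
  have e2: "\<epsilon>/2 > 0" using eps_pos by simp
  have ev1: "eventually (\<lambda>t. (SUP x\<in>F. ennreal (q t x)) < ennreal (\<epsilon>/2)) at_top"
    using order_tendstoD(2)[OF A3a1] e2 by simp
  have ev2: "eventually (\<lambda>t. limsup (\<lambda>n. ereal (outer_prob M
        {w. \<exists>x\<in>V n. \<beta> n * qk w (adj n) (nat \<lfloor>\<gamma> n * t\<rfloor>) \<rho> x > \<epsilon>/2})) < ereal \<eta>) at_top"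
    using order_tendstoD(2)[OF A3b1[rule_format, OF e2]] eta by simp
  obtain N where N: "\<forall>t\<ge>N. (SUP x\<in>F. ennreal (q t x)) < ennreal (\<epsilon>/2) \<and>
     limsup (\<lambda>n. ereal (outer_prob M
        {w. \<exists>x\<in>V n. \<beta> n * qk w (adj n) (nat \<lfloor>\<gamma> n * t\<rfloor>) \<rho> x > \<epsilon>/2})) < ereal \<eta>"
    using eventually_conj[OF ev1 ev2] by (auto simp: eventually_at_top_linorder)
  define T where "T = max N T1"
  have "\<forall>t\<ge>T. \<forall>x\<in>F. q t x < \<epsilon>/2"
  proof (intro allI impI ballI)
    fix t x assume "T \<le> t" "x \<in> F"
    then have "ennreal (q t x) < ennreal (\<epsilon>/2)"
      using N T_def by (meson SUP_upper le_less_trans max.boundedE)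
    then show "q t x < \<epsilon>/2" using e2 by (rule ennreal_less_real)
  qed
  moreover have "eventually (\<lambda>n. ereal (outer_prob M
        {w. \<exists>x\<in>V n. \<beta> n * qk w (adj n) (nat \<lfloor>\<gamma> n * T\<rfloor>) \<rho> x > \<epsilon>/2}) < ereal \<eta>) sequentially"
    using N T_def by (intro Limsup_lessD) auto
  then have "\<exists>N. \<forall>n\<ge>N. outer_prob M {w. \<exists>x\<in>V n. \<beta> n * qk w (adj n) (nat \<lfloor>\<gamma> n * T\<rfloor>) \<rho> x > \<epsilon>/2} < \<eta>"
    by (auto simp: eventually_sequentially)
  ultimately show ?thesis using T_def by (intro exI[of _ T]) auto
qed

lemma halving:
  assumes s: "s > 0" and x: "x \<in> F" and sx: "s \<le> dist \<rho> x"
  shows "\<exists>z\<in>F. s \<le> dist \<rho> z \<and> dist \<rho> z < 2 * s \<and> dist z x + dist \<rho> z \<le> dist \<rho> x"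
proof -
  have H: "\<forall>x\<in>F. s \<le> dist \<rho> x \<and> dist \<rho> x < 2^k * s \<longrightarrow>
      (\<exists>z\<in>F. s \<le> dist \<rho> z \<and> dist \<rho> z < 2 * s \<and> dist z x + dist \<rho> z \<le> dist \<rho> x)" for k
  proof (induction k)
    case 0 then show ?case by auto
  next
    case (Suc k)
    show ?case
    proof (intro ballI impI)
      fix x assume x: "x \<in> F" and h: "s \<le> dist \<rho> x \<and> dist \<rho> x < 2 ^ Suc k * s"
      show "\<exists>z\<in>F. s \<le> dist \<rho> z \<and> dist \<rho> z < 2 * s \<and> dist z x + dist \<rho> z \<le> dist \<rho> x"
      proof (cases "dist \<rho> x < 2 * s")
        case True then show ?thesis using x h by (intro bexI[of _ x]) auto
      next
        case False
        obtain m where m: "m \<in> F" "dist \<rho> m = dist \<rho> x / 2" "dist m x = dist \<rho> x / 2"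
          using A3_mid rho_F x unfolding midpoint_property_def by blast
        have "s \<le> dist \<rho> m \<and> dist \<rho> m < 2^k * s" using m h False by auto
        then obtain z where z: "z \<in> F" "s \<le> dist \<rho> z" "dist \<rho> z < 2 * s" "dist z m + dist \<rho> z \<le> dist \<rho> m"
          using Suc m by blast
        have "dist z x \<le> dist z m + dist m x" by (rule dist_triangle)
        then show ?thesis using z m by (intro bexI[of _ z]) auto
      qed
    qed
  qed
  obtain k where "dist \<rho> x / s < 2 ^ k" using real_arch_pow[of 2 "dist \<rho> x / s"] by auto
  then have "dist \<rho> x < 2^k * s" using s by (simp add: divide_less_eq)
  then show ?thesis using H[of k] x sx by blast
qed

end

context setting begin

lemma far_geom:
  assumes R: "R > 0"
  shows "\<exists>r0>0. \<exists>N. \<forall>n\<ge>N. \<forall>x\<in>F. r0 \<le> dist \<rho> x \<longrightarrow> g n x \<notin> gball (V n) (adj n) \<rho> (\<alpha> n * R)"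
proof -
  obtain c1 where c1: "c1 > 0" "\<forall>n. \<forall>x\<in>V n. \<forall>y\<in>V n. real (gdist (adj n) x y) \<ge> c1 * \<alpha> n * dist x y"
    using A1a1 by blast
  define s where "s = R / c1 + 1"
  have "R / c1 > 0" using R c1 by simp
  then have s: "s > 0" by (simp add: s_def)
  have "eventually (\<lambda>n. (SUP x\<in>ball \<rho> (2 * s) \<inter> F. ennreal (infdist x (V n))) < ennreal 1) sequentially"
    using order_tendstoD(2)[OF A1b[rule_format, of "2 * s"]] s by simp
  then obtain N where N: "\<forall>n\<ge>N. (SUP x\<in>ball \<rho> (2 * s) \<inter> F. ennreal (infdist x (V n))) < ennreal 1"
    by (auto simp: eventually_sequentially)
  have "\<forall>n\<ge>N. \<forall>x\<in>F. 2 * s \<le> dist \<rho> x \<longrightarrow> g n x \<notin> gball (V n) (adj n) \<rho> (\<alpha> n * R)"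
  proof (intro allI impI ballI)
    fix n x assume n: "n \<ge> N" and x: "x \<in> F" and d: "2 * s \<le> dist \<rho> x"
    obtain z where z: "z \<in> F" "s \<le> dist \<rho> z" "dist \<rho> z < 2 * s" "dist z x + dist \<rho> z \<le> dist \<rho> x"
      using halving[OF s x] d s by auto
    have "ennreal (infdist z (V n)) < ennreal 1"
      using N n z by (meson IntI SUP_upper le_less_trans mem_ball)
    then have iz: "infdist z (V n) < 1" by (rule ennreal_less_real) simp
    have gz: "dist z (g n z) < 1" using g_close[of z n] iz by linarith
    have "dist x (g n x) \<le> dist x (g n z)" using g_def by blast
    also have "\<dots> \<le> dist x z + dist z (g n z)" by (rule dist_triangle)
    finally have gx: "dist x (g n x) < dist x z + 1" using gz by linarith
    have "dist \<rho> x \<le> dist \<rho> (g n x) + dist (g n x) x" by (rule dist_triangle)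
    then have dg: "dist \<rho> (g n x) \<ge> R / c1" using gx z s_def by (simp add: dist_commute)
    have "real (gdist (adj n) \<rho> (g n x)) \<ge> c1 * \<alpha> n * dist \<rho> (g n x)"
      using c1 G_root g_def by blast
    moreover have "c1 * \<alpha> n * dist \<rho> (g n x) \<ge> c1 * \<alpha> n * (R / c1)"
      using dg c1 \<alpha>_nonneg by (intro mult_left_mono) auto
    moreover have "c1 * \<alpha> n * (R / c1) = \<alpha> n * R" using c1 by simp
    ultimately show "g n x \<notin> gball (V n) (adj n) \<rho> (\<alpha> n * R)"
      unfolding gball_def by auto
  qed
  then show ?thesis using s by (intro exI[of _ "2 * s"]) auto
qed

lemma far:
  assumes a: "0 < a" "a \<le> b" and eta: "\<eta> > 0"
  shows "\<exists>r>0. \<exists>N. \<forall>n\<ge>N. outer_prob M {w. \<exists>x\<in>F - ball \<rho> r. \<exists>t\<in>{a..b}.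
     \<bar>\<beta> n * qk w (adj n) (nat \<lfloor>\<gamma> n * t\<rfloor>) \<rho> (g n x) - q t x\<bar> > \<epsilon>} < \<eta>"
proof -
  have e2: "\<epsilon>/2 > 0" using eps_pos by simp
  have "eventually (\<lambda>r. (SUP x\<in>F - ball \<rho> r. SUP t\<in>{a..b}. ennreal (q t x)) < ennreal (\<epsilon>/2)) at_top"
    using order_tendstoD(2)[OF A3a2[rule_format, OF conjI[OF a]]] e2 by simp
  then obtain r1 where r1: "\<forall>r\<ge>r1. (SUP x\<in>F - ball \<rho> r. SUP t\<in>{a..b}. ennreal (q t x)) < ennreal (\<epsilon>/2)"
    by (auto simp: eventually_at_top_linorder)
  have "eventually (\<lambda>R. limsup (\<lambda>n. ereal (outer_prob M
        {w. \<exists>x\<in>V n - gball (V n) (adj n) \<rho> (\<alpha> n * R). \<exists>t\<in>{a..b}.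
              \<beta> n * qk w (adj n) (nat \<lfloor>\<gamma> n * t\<rfloor>) \<rho> x > \<epsilon>/2})) < ereal \<eta>) at_top"
    using order_tendstoD(2)[OF A3b2[rule_format, OF conjI[OF a] e2]] eta by simp
  then obtain R0 where R0: "\<forall>R\<ge>R0. limsup (\<lambda>n. ereal (outer_prob M
        {w. \<exists>x\<in>V n - gball (V n) (adj n) \<rho> (\<alpha> n * R). \<exists>t\<in>{a..b}.
              \<beta> n * qk w (adj n) (nat \<lfloor>\<gamma> n * t\<rfloor>) \<rho> x > \<epsilon>/2})) < ereal \<eta>"
    by (auto simp: eventually_at_top_linorder)
  define R where "R = max R0 1"
  have R: "R > 0" "R \<ge> R0" by (auto simp: R_def)
  obtain r0 N1 where r0: "r0 > 0" "\<forall>n\<ge>N1. \<forall>x\<in>F. r0 \<le> dist \<rho> x \<longrightarrow> g n x \<notin> gball (V n) (adj n) \<rho> (\<alpha> n * R)"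
    using far_geom[OF R(1)] by blast
  have "eventually (\<lambda>n. ereal (outer_prob M
        {w. \<exists>x\<in>V n - gball (V n) (adj n) \<rho> (\<alpha> n * R). \<exists>t\<in>{a..b}.
              \<beta> n * qk w (adj n) (nat \<lfloor>\<gamma> n * t\<rfloor>) \<rho> x > \<epsilon>/2}) < ereal \<eta>) sequentially"
    using R0 R by (intro Limsup_lessD) auto
  then obtain N2 where N2: "\<forall>n\<ge>N2. outer_prob M
        {w. \<exists>x\<in>V n - gball (V n) (adj n) \<rho> (\<alpha> n * R). \<exists>t\<in>{a..b}.
              \<beta> n * qk w (adj n) (nat \<lfloor>\<gamma> n * t\<rfloor>) \<rho> x > \<epsilon>/2} < \<eta>"
    by (auto simp: eventually_sequentially)
  define r where "r = max r0 r1"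
  have r: "r > 0" "r \<ge> r0" "r \<ge> r1" using r0 by (auto simp: r_def)
  have "\<forall>n\<ge>max N1 N2. outer_prob M {w. \<exists>x\<in>F - ball \<rho> r. \<exists>t\<in>{a..b}.
     \<bar>\<beta> n * qk w (adj n) (nat \<lfloor>\<gamma> n * t\<rfloor>) \<rho> (g n x) - q t x\<bar> > \<epsilon>} < \<eta>"
  proof (intro allI impI)
    fix n assume n: "n \<ge> max N1 N2"
    have "outer_prob M {w. \<exists>x\<in>F - ball \<rho> r. \<exists>t\<in>{a..b}.
     \<bar>\<beta> n * qk w (adj n) (nat \<lfloor>\<gamma> n * t\<rfloor>) \<rho> (g n x) - q t x\<bar> > \<epsilon>} \<le> outer_prob M
        {w. \<exists>x\<in>V n - gball (V n) (adj n) \<rho> (\<alpha> n * R). \<exists>t\<in>{a..b}.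
              \<beta> n * qk w (adj n) (nat \<lfloor>\<gamma> n * t\<rfloor>) \<rho> x > \<epsilon>/2}"
    proof (rule op_mono, safe)
      fix w x t assume w: "w \<in> space M" and x: "x \<in> F" "x \<notin> ball \<rho> r" and t: "t \<in> {a..b}"
        and big: "\<bar>\<beta> n * qk w (adj n) (nat \<lfloor>\<gamma> n * t\<rfloor>) \<rho> (g n x) - q t x\<bar> > \<epsilon>"
      have "ennreal (q t x) < ennreal (\<epsilon>/2)"
        using r1 r x t by (meson DiffI SUP_upper le_less_trans)
      then have qx: "q t x < \<epsilon>/2" using e2 by (rule ennreal_less_real)
      have G0: "0 \<le> \<beta> n * qk w (adj n) (nat \<lfloor>\<gamma> n * t\<rfloor>) \<rho> (g n x)"
        using \<beta>_nonneg qk_nonnegM[OF w] by simp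
      have Gb: "\<beta> n * qk w (adj n) (nat \<lfloor>\<gamma> n * t\<rfloor>) \<rho> (g n x) > \<epsilon>/2"
        using abs_big[OF big G0] q_nonneg qx x t a by auto
      have "g n x \<in> V n - gball (V n) (adj n) \<rho> (\<alpha> n * R)"
        using r0 n x r g_def by (auto simp: dist_commute)
      then show "\<exists>x\<in>V n - gball (V n) (adj n) \<rho> (\<alpha> n * R). \<exists>t\<in>{a..b}.
              \<beta> n * qk w (adj n) (nat \<lfloor>\<gamma> n * t\<rfloor>) \<rho> x > \<epsilon>/2"
        using Gb t by blast
    qed
    also have "\<dots> < \<eta>" using N2 n by auto
    finally show "outer_prob M {w. \<exists>x\<in>F - ball \<rho> r. \<exists>t\<in>{a..b}.
     \<bar>\<beta> n * qk w (adj n) (nat \<lfloor>\<gamma> n * t\<rfloor>) \<rho> (g n x) - q t x\<bar> > \<epsilon>} < \<eta>" .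
  qed
  then show ?thesis using r by blast
qed

end

context setting begin

lemma near_core:
  fixes n w x t y \<delta> \<delta>' r c2' Qm d0 c e1 e2 aT
  assumes w: "w \<in> space M"
    and a: "0 < a" "a \<le> b" and t: "t \<in> {a..b}"
    and x: "x \<in> F" "dist \<rho> x < r"
    and y: "dist x y < \<delta>" "dist \<rho> y \<le> r"
    and dl: "0 < \<delta>" "\<delta> \<le> 1" "2 * \<delta> < d0"
    and gx: "dist x (g n x) < \<delta>"
    and pos: "\<alpha> n > 0" "\<beta> n > 0" "\<gamma> n \<ge> 1" "1 / \<gamma> n < d0"
    and c2: "c2' \<ge> 0" "\<forall>x\<in>V n \<inter> ball \<rho> (r+1). \<forall>y\<in>V n \<inter> ball \<rho> (r+1).
          real (gdist (adj n) x y) \<le> c2' * \<alpha> n * dist x y + aT"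
    and aT: "aT \<le> \<alpha> n * (\<delta>'/2)" "aT < \<alpha> n" "3 * c2' * \<delta> \<le> \<delta>'/2"
    and nE3: "\<not> (\<exists>x\<in>gball (V n) (adj n) \<rho> (\<alpha> n * (c2' * (r+1) + 1)).
                \<exists>y\<in>gball (V n) (adj n) \<rho> (\<alpha> n * (c2' * (r+1) + 1)).
                real (gdist (adj n) x y) \<le> \<alpha> n * \<delta>' \<and>
                (\<exists>t\<in>{a..b}. \<beta> n * \<bar>qk w (adj n) (nat \<lfloor>\<gamma> n * t\<rfloor>) \<rho> x
                                   - qk w (adj n) (nat \<lfloor>\<gamma> n * t\<rfloor>) \<rho> y\<bar> > \<epsilon>/4))"
    and nE1: "\<bar>gmeas w (adj n) (V n) (ball y \<delta>) / \<beta> n - measure \<nu> (ball y \<delta>)\<bar> \<le> e1"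
    and nE2: "\<forall>t\<in>{a..b+1}. \<bar>hitp w (adj n) (nat \<lfloor>\<gamma> n * t\<rfloor>) \<rho> (ball y \<delta>)
             - enn2real (\<integral>\<^sup>+z\<in>ball y \<delta> \<inter> F. ennreal (q t z) \<partial>\<nu>)\<bar> \<le> e2"
    and unif: "\<forall>s t x y. s \<in> {a..b+1} \<and> t \<in> {a..b+1} \<and> x \<in> F \<inter> cball \<rho> (r+1) \<and> y \<in> F \<inter> cball \<rho> (r+1)
        \<and> \<bar>s - t\<bar> < d0 \<and> dist x y < d0 \<longrightarrow> \<bar>q s x - q t y\<bar> < \<epsilon>/8"
    and qbd: "\<forall>t\<in>{a..b+1}. \<forall>x\<in>F \<inter> cball \<rho> (r+1). q t x \<le> Qm"
    and c: "0 < c" "c \<le> measure \<nu> (ball y \<delta>)" "e1 \<le> c/2" "e1 * (Qm + 1) \<le> c * \<epsilon> / 32" "e2 \<le> c * \<epsilon> / 32"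
  shows "\<bar>\<beta> n * qk w (adj n) (nat \<lfloor>\<gamma> n * t\<rfloor>) \<rho> (g n x) - q t x\<bar> \<le> 5/8 * \<epsilon>"
proof -
  define m where "m = nat \<lfloor>\<gamma> n * t\<rfloor>"
  define B where "B = ball y \<delta>"
  define S where "S = B \<inter> V n"
  have r0: "r > 0" using x(2) zero_le_dist[of \<rho> x] by linarith
  have rho1: "\<rho> \<in> V n \<inter> ball \<rho> (r+1)" using G_root r0 by auto
  have c2a: "c2' * \<alpha> n \<ge> 0" using c2 pos by simp
  have gd_rho: "real (gdist (adj n) \<rho> v) \<le> c2' * \<alpha> n * (r+1) + aT" if "v \<in> V n \<inter> ball \<rho> (r+1)" for v
  proof -
    have "real (gdist (adj n) \<rho> v) \<le> c2' * \<alpha> n * dist \<rho> v + aT" using c2(2) rho1 that by blast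
    also have "\<dots> \<le> c2' * \<alpha> n * (r+1) + aT" using that c2a by (intro add_right_mono mult_left_mono) auto
    finally show ?thesis .
  qed
  have Sb: "v \<in> V n \<inter> ball \<rho> (r+1)" if "v \<in> S" for v
  proof -
    have "dist \<rho> v \<le> dist \<rho> y + dist y v" by (rule dist_triangle)
    then show ?thesis using that y dl unfolding S_def B_def by auto
  qed
  have finS: "finite S"
  proof -
    have "S \<subseteq> {v\<in>V n. real (gdist (adj n) \<rho> v) \<le> c2' * \<alpha> n * (r+1) + aT}"
      using Sb gd_rho unfolding S_def by auto
    moreover have "finite {v\<in>V n. real (gdist (adj n) \<rho> v) \<le> c2' * \<alpha> n * (r+1) + aT}"
      using G_locfin G_conn G_root by (intro gball_finite) auto
    ultimately show ?thesis by (rule finite_subset)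
  qed
  have hsum: "hitp w (adj n) k \<rho> B = (\<Sum>v\<in>S. hitp w (adj n) k \<rho> {v})" for k
    unfolding S_def using G_edges G_root finS unfolding S_def by (intro hitp_sum) auto
  define Q where "Q = (\<Sum>v\<in>S. qk w (adj n) m \<rho> v * wdeg w (adj n) v)"
  have Qeq: "Q = (hitp w (adj n) m \<rho> B + hitp w (adj n) (Suc m) \<rho> B) / 2"
  proof -
    have "qk w (adj n) m \<rho> v * wdeg w (adj n) v = (hitp w (adj n) m \<rho> {v} + hitp w (adj n) (Suc m) \<rho> {v}) / 2"
      if "v \<in> S" for v
    proof -
      have "wdeg w (adj n) v > 0" using wdeg_posM[OF w] that unfolding S_def by auto
      then show ?thesis unfolding qk_def hk_def by (simp add: field_simps)
    qed
    then have "Q = (\<Sum>v\<in>S. (hitp w (adj n) m \<rho> {v} + hitp w (adj n) (Suc m) \<rho> {v}) / 2)"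
      unfolding Q_def by (intro sum.cong) auto
    also have "\<dots> = ((\<Sum>v\<in>S. hitp w (adj n) m \<rho> {v}) + (\<Sum>v\<in>S. hitp w (adj n) (Suc m) \<rho> {v})) / 2"
      by (simp only: sum_divide_distrib[symmetric] sum.distrib)
    also have "\<dots> = (hitp w (adj n) m \<rho> B + hitp w (adj n) (Suc m) \<rho> B) / 2"
      by (simp only: hsum)
    finally show ?thesis .
  qed
  define N where "N = gmeas w (adj n) (V n) B"
  have Neq: "N = (\<Sum>v\<in>S. wdeg w (adj n) v)" unfolding N_def gmeas_def S_def ..
  have gxV: "g n x \<in> V n" using g_def by blast
  have gxb: "g n x \<in> V n \<inter> ball \<rho> (r+1)"
  proof -
    have "dist \<rho> (g n x) \<le> dist \<rho> x + dist x (g n x)" by (rule dist_triangle)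
    then show ?thesis using gxV x gx dl by auto
  qed
  have ingball: "v \<in> gball (V n) (adj n) \<rho> (\<alpha> n * (c2' * (r+1) + 1))" if "v \<in> V n \<inter> ball \<rho> (r+1)" for v
  proof -
    have "real (gdist (adj n) \<rho> v) \<le> c2' * \<alpha> n * (r+1) + aT" by (rule gd_rho[OF that])
    also have "\<dots> < \<alpha> n * (c2' * (r+1) + 1)" using aT by (simp add: algebra_simps)
    finally show ?thesis using that unfolding gball_def by auto
  qed
  have close: "\<beta> n * \<bar>qk w (adj n) m \<rho> (g n x) - qk w (adj n) m \<rho> v\<bar> \<le> \<epsilon>/4" if v: "v \<in> S" for v
  proof -
    have "dist (g n x) v \<le> dist (g n x) x + dist x v" by (rule dist_triangle)
    moreover have "dist x v \<le> dist x y + dist y v" by (rule dist_triangle)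
    ultimately have dv: "dist (g n x) v \<le> 3 * \<delta>" using gx y v unfolding S_def B_def by (simp add: dist_commute)
    have "real (gdist (adj n) (g n x) v) \<le> c2' * \<alpha> n * dist (g n x) v + aT"
      using c2(2) gxb Sb[OF v] by blast
    also have "\<dots> \<le> c2' * \<alpha> n * (3 * \<delta>) + aT" using dv c2a by (intro add_right_mono mult_left_mono) auto
    also have "\<dots> = \<alpha> n * (3 * c2' * \<delta>) + aT" by simp
    also have "\<dots> \<le> \<alpha> n * (\<delta>'/2) + \<alpha> n * (\<delta>'/2)"
      using aT pos by (intro add_mono mult_left_mono) auto
    finally have "real (gdist (adj n) (g n x) v) \<le> \<alpha> n * \<delta>'" by (simp add: mult.commute)
    then show ?thesis using nE3 ingball[OF gxb] ingball[OF Sb[OF v]] t unfolding m_def by force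
  qed
  define Gx where "Gx = \<beta> n * qk w (adj n) m \<rho> (g n x)"
  have hG: "\<bar>Gx * N - \<beta> n * Q\<bar> \<le> \<epsilon>/4 * N"
  proof -
    have eqG: "Gx * N - \<beta> n * Q = (\<Sum>v\<in>S. (\<beta> n * qk w (adj n) m \<rho> (g n x) - \<beta> n * qk w (adj n) m \<rho> v) * wdeg w (adj n) v)"
    proof -
      have e1: "Gx * N = (\<Sum>v\<in>S. Gx * wdeg w (adj n) v)" unfolding Neq by (rule sum_distrib_left)
      have e2: "\<beta> n * Q = (\<Sum>v\<in>S. \<beta> n * (qk w (adj n) m \<rho> v * wdeg w (adj n) v))"
        unfolding Q_def by (rule sum_distrib_left)
      show ?thesis unfolding e1 e2 sum_subtractf[symmetric]
        by (intro sum.cong) (simp_all add: Gx_def algebra_simps)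
    qed
    have "\<bar>(\<Sum>v\<in>S. (\<beta> n * qk w (adj n) m \<rho> (g n x) - \<beta> n * qk w (adj n) m \<rho> v) * wdeg w (adj n) v)\<bar> \<le> (\<Sum>v\<in>S. \<bar>(\<beta> n * qk w (adj n) m \<rho> (g n x) - \<beta> n * qk w (adj n) m \<rho> v) * wdeg w (adj n) v\<bar>)"
      by (rule sum_abs)
    also have "\<dots> \<le> (\<Sum>v\<in>S. \<epsilon>/4 * wdeg w (adj n) v)"
    proof (rule sum_mono)
      fix v assume v: "v \<in> S"
      have wd: "wdeg w (adj n) v > 0" using wdeg_posM[OF w] v unfolding S_def by auto
      have "\<bar>(\<beta> n * qk w (adj n) m \<rho> (g n x) - \<beta> n * qk w (adj n) m \<rho> v) * wdeg w (adj n) v\<bar>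
          = \<beta> n * \<bar>qk w (adj n) m \<rho> (g n x) - qk w (adj n) m \<rho> v\<bar> * wdeg w (adj n) v"
      proof -
        have "\<beta> n * qk w (adj n) m \<rho> (g n x) - \<beta> n * qk w (adj n) m \<rho> v = \<beta> n * (qk w (adj n) m \<rho> (g n x) - qk w (adj n) m \<rho> v)"
          by (simp only: right_diff_distrib)
        then show ?thesis using wd pos by (simp only: abs_mult abs_of_pos)
      qed
      also have "\<dots> \<le> \<epsilon>/4 * wdeg w (adj n) v" using close[OF v] wd by (intro mult_right_mono) auto
      finally show "\<bar>(\<beta> n * qk w (adj n) m \<rho> (g n x) - \<beta> n * qk w (adj n) m \<rho> v) * wdeg w (adj n) v\<bar>
          \<le> \<epsilon>/4 * wdeg w (adj n) v" .
    qed
    also have "\<dots> = \<epsilon>/4 * N" unfolding Neq by (simp add: sum_distrib_left)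
    finally show ?thesis unfolding eqG .
  qed
  have gt0: "\<gamma> n * t \<ge> 0" using pos t a by auto
  define t' where "t' = t + 1 / \<gamma> n"
  have mt': "nat \<lfloor>\<gamma> n * t'\<rfloor> = Suc m"
  proof -
    have "\<gamma> n * t' = \<gamma> n * t + 1" using pos unfolding t'_def by (simp add: distrib_left)
    then have "\<lfloor>\<gamma> n * t'\<rfloor> = \<lfloor>\<gamma> n * t\<rfloor> + 1" by simp
    moreover have "\<lfloor>\<gamma> n * t\<rfloor> \<ge> 0" using gt0 by simp
    ultimately show ?thesis unfolding m_def by (simp add: nat_add_distrib)
  qed
  have g1: "1 / \<gamma> n \<le> 1" "1 / \<gamma> n > 0" using pos by auto
  have ta: "a \<le> t" "t \<le> b" using t by auto
  have tI: "t \<in> {a..b+1}" "t' \<in> {a..b+1}" unfolding t'_def atLeastAtMost_iff using ta g1 by linarith+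
  have tt': "\<bar>t' - t\<bar> < d0" using pos g1 unfolding t'_def by simp
  define \<mu> where "\<mu> = measure \<nu> B"
  have BFs: "B \<inter> F \<in> sets \<nu>" using ball_sets F_sets unfolding B_def by auto
  have BFe: "emeasure \<nu> (B \<inter> F) < \<infinity>" using ball_F ball_fin unfolding B_def by simp
  have BFm: "measure \<nu> (B \<inter> F) = \<mu>" unfolding \<mu>_def B_def measure_def using ball_F by simp
  have xK: "x \<in> F \<inter> cball \<rho> (r+1)" using x by auto
  have qx0: "0 \<le> q t x" using q_nonneg x t a by auto
  have zK: "z \<in> F \<inter> cball \<rho> (r+1) \<and> dist z x < d0" if "z \<in> B \<inter> F" for z
  proof -
    have "dist \<rho> z \<le> dist \<rho> y + dist y z" by (rule dist_triangle)
    moreover have "dist z x \<le> dist z y + dist y x" by (rule dist_triangle)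
    ultimately show ?thesis using that y dl unfolding B_def by (auto simp: dist_commute)
  qed
  have Ib: "\<mu> * (q t x - \<epsilon>/8) \<le> enn2real (\<integral>\<^sup>+z\<in>B \<inter> F. ennreal (q s z) \<partial>\<nu>) \<and>
            enn2real (\<integral>\<^sup>+z\<in>B \<inter> F. ennreal (q s z) \<partial>\<nu>) \<le> \<mu> * (q t x + \<epsilon>/8)"
    if s: "s \<in> {a..b+1}" "\<bar>s - t\<bar> < d0" for s
  proof -
    have bd: "\<bar>q s z - q t x\<bar> < \<epsilon>/8" if "z \<in> B \<inter> F" for z
      using unif zK[OF that] s tI xK by blast
    have "\<forall>z\<in>B \<inter> F. q s z \<le> q t x + \<epsilon>/8" "\<forall>z\<in>B \<inter> F. q t x - \<epsilon>/8 \<le> q s z"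
    proof -
      have "q s z \<le> q t x + \<epsilon>/8 \<and> q t x - \<epsilon>/8 \<le> q s z" if "z \<in> B \<inter> F" for z
        using bd[OF that] by linarith
      then show "\<forall>z\<in>B \<inter> F. q s z \<le> q t x + \<epsilon>/8" "\<forall>z\<in>B \<inter> F. q t x - \<epsilon>/8 \<le> q s z" by auto
    qed
    then show ?thesis using int_bounds[OF BFs BFe, of "q s"] BFm qx0 eps_pos by auto
  qed
  have I1: "\<mu> * (q t x - \<epsilon>/8) \<le> enn2real (\<integral>\<^sup>+z\<in>B \<inter> F. ennreal (q t z) \<partial>\<nu>) \<and>
            enn2real (\<integral>\<^sup>+z\<in>B \<inter> F. ennreal (q t z) \<partial>\<nu>) \<le> \<mu> * (q t x + \<epsilon>/8)"
    using Ib[of t] tI dl by auto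
  have I2: "\<mu> * (q t x - \<epsilon>/8) \<le> enn2real (\<integral>\<^sup>+z\<in>B \<inter> F. ennreal (q t' z) \<partial>\<nu>) \<and>
            enn2real (\<integral>\<^sup>+z\<in>B \<inter> F. ennreal (q t' z) \<partial>\<nu>) \<le> \<mu> * (q t x + \<epsilon>/8)"
    using Ib[of t'] tI tt' by auto
  have h1: "\<bar>hitp w (adj n) m \<rho> B - enn2real (\<integral>\<^sup>+z\<in>B \<inter> F. ennreal (q t z) \<partial>\<nu>)\<bar> \<le> e2"
    using nE2 tI unfolding m_def B_def by blast
  have h2: "\<bar>hitp w (adj n) (Suc m) \<rho> B - enn2real (\<integral>\<^sup>+z\<in>B \<inter> F. ennreal (q t' z) \<partial>\<nu>)\<bar> \<le> e2"
    using nE2 tI mt' unfolding B_def by metis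
  have "\<bar>Gx - q t x\<bar> \<le> 5/8 * \<epsilon>"
    by (rule arith_core[OF pos(2) c(1) _ qx0 _ eps_pos hG _ c(3) c(4) c(5) Qeq h1 h2])
       (use c nE1 I1 I2 qbd tI xK in \<open>auto simp: \<mu>_def B_def N_def\<close>)
  then show ?thesis unfolding Gx_def m_def .
qed

end

context setting begin

lemma near:
  assumes a: "0 < a" "a \<le> b" and r: "r > 0" and eta: "\<eta> > 0"
  shows "\<exists>N. \<forall>n\<ge>N. outer_prob M {w. \<exists>x\<in>F \<inter> ball \<rho> r. \<exists>t\<in>{a..b}.
     \<bar>\<beta> n * qk w (adj n) (nat \<lfloor>\<gamma> n * t\<rfloor>) \<rho> (g n x) - q t x\<bar> > \<epsilon>} < \<eta>"
proof -
  have Kc: "compact (F \<inter> cball \<rho> (r+1))" using F_proper r by auto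
  obtain d0 where d0: "d0 > 0" "\<forall>s t x y. s \<in> {a..b+1} \<and> t \<in> {a..b+1} \<and> x \<in> F \<inter> cball \<rho> (r+1) \<and> y \<in> F \<inter> cball \<rho> (r+1)
        \<and> \<bar>s - t\<bar> < d0 \<and> dist x y < d0 \<longrightarrow> \<bar>q s x - q t y\<bar> < \<epsilon>/8"
    using q_unif[OF q_cont Kc _ a(1), of "\<epsilon>/8" "b+1"] eps_pos by auto
  obtain B0 where B0: "\<forall>t x. t \<in> {a..b+1} \<and> x \<in> F \<inter> cball \<rho> (r+1) \<longrightarrow> \<bar>q t x\<bar> \<le> B0"
    using q_bdd[OF q_cont Kc _ a(1), of "b+1"] by auto
  define Qm where "Qm = max B0 0"
  have Qm: "Qm \<ge> 0" "\<forall>t\<in>{a..b+1}. \<forall>x\<in>F \<inter> cball \<rho> (r+1). q t x \<le> Qm"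
    using B0 unfolding Qm_def by (auto, meson abs_ge_self max.coboundedI1 order_trans)
  obtain aT where aT: "\<forall>n. aT n \<ge> 0" "aT \<in> o(\<alpha>)"
     "\<forall>r>0. \<exists>c2. \<exists>n0. \<forall>n\<ge>n0. \<forall>x\<in>V n \<inter> ball \<rho> r. \<forall>y\<in>V n \<inter> ball \<rho> r.
          real (gdist (adj n) x y) \<le> c2 * \<alpha> n * dist x y + aT n"
    using A1a2 by blast
  obtain c2 n0 where c2: "\<forall>n\<ge>n0. \<forall>x\<in>V n \<inter> ball \<rho> (r+1). \<forall>y\<in>V n \<inter> ball \<rho> (r+1).
          real (gdist (adj n) x y) \<le> c2 * \<alpha> n * dist x y + aT n"
    using aT(3) r by (metis add_pos_pos zero_less_one)
  define c2' where "c2' = \<bar>c2\<bar>"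
  have c2': "c2' \<ge> 0" unfolding c2'_def by simp
  have c2b: "\<forall>n\<ge>n0. \<forall>x\<in>V n \<inter> ball \<rho> (r+1). \<forall>y\<in>V n \<inter> ball \<rho> (r+1).
          real (gdist (adj n) x y) \<le> c2' * \<alpha> n * dist x y + aT n"
  proof (intro allI impI ballI)
    fix n x y assume n: "n \<ge> n0" and xy: "x \<in> V n \<inter> ball \<rho> (r+1)" "y \<in> V n \<inter> ball \<rho> (r+1)"
    have "c2 * \<alpha> n * dist x y \<le> c2' * \<alpha> n * dist x y"
      unfolding c2'_def using \<alpha>_nonneg by (intro mult_right_mono) auto
    then show "real (gdist (adj n) x y) \<le> c2' * \<alpha> n * dist x y + aT n" using c2 n xy by force
  qed
  define r2 where "r2 = c2' * (r+1) + 1"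
  have r2: "r2 > 0" using c2' r unfolding r2_def by (simp add: add_nonneg_pos)
  have e4: "\<epsilon>/4 > 0" using eps_pos by simp
  have eta4: "0 < ereal (\<eta>/4)" using eta by simp
  have "eventually (\<lambda>\<delta>. limsup (\<lambda>n. ereal (outer_prob M
          {w. \<exists>x\<in>gball (V n) (adj n) \<rho> (\<alpha> n * r2). \<exists>y\<in>gball (V n) (adj n) \<rho> (\<alpha> n * r2).
                real (gdist (adj n) x y) \<le> \<alpha> n * \<delta> \<and>
                (\<exists>t\<in>{a..b}. \<beta> n * \<bar>qk w (adj n) (nat \<lfloor>\<gamma> n * t\<rfloor>) \<rho> x
                                   - qk w (adj n) (nat \<lfloor>\<gamma> n * t\<rfloor>) \<rho> y\<bar> > \<epsilon>/4)})) < ereal (\<eta>/4)) (at_right 0)"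
    using order_tendstoD(2)[OF A2[rule_format, OF conjI[OF a] r2 e4] eta4] .
  then obtain b0 where b0: "b0 > 0" "\<forall>\<delta>>0. \<delta> < b0 \<longrightarrow> limsup (\<lambda>n. ereal (outer_prob M
          {w. \<exists>x\<in>gball (V n) (adj n) \<rho> (\<alpha> n * r2). \<exists>y\<in>gball (V n) (adj n) \<rho> (\<alpha> n * r2).
                real (gdist (adj n) x y) \<le> \<alpha> n * \<delta> \<and>
                (\<exists>t\<in>{a..b}. \<beta> n * \<bar>qk w (adj n) (nat \<lfloor>\<gamma> n * t\<rfloor>) \<rho> x
                                   - qk w (adj n) (nat \<lfloor>\<gamma> n * t\<rfloor>) \<rho> y\<bar> > \<epsilon>/4)})) < ereal (\<eta>/4)"
    by (subst (asm) eventually_at_right[of "0::real" 1]) (simp, blast)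
  define \<delta>' where "\<delta>' = b0 / 2"
  have dl': "\<delta>' > 0" "\<delta>' < b0" using b0 unfolding \<delta>'_def by auto
  define E3 where "E3 = (\<lambda>n. {w. \<exists>x\<in>gball (V n) (adj n) \<rho> (\<alpha> n * r2). \<exists>y\<in>gball (V n) (adj n) \<rho> (\<alpha> n * r2).
                real (gdist (adj n) x y) \<le> \<alpha> n * \<delta>' \<and>
                (\<exists>t\<in>{a..b}. \<beta> n * \<bar>qk w (adj n) (nat \<lfloor>\<gamma> n * t\<rfloor>) \<rho> x
                                   - qk w (adj n) (nat \<lfloor>\<gamma> n * t\<rfloor>) \<rho> y\<bar> > \<epsilon>/4)})"
  have evE3: "eventually (\<lambda>n. ereal (outer_prob M (E3 n)) < ereal (\<eta>/4)) sequentially"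
    unfolding E3_def using b0 dl' by (intro Limsup_lessD) auto
  define \<delta> where "\<delta> = min (d0/4) (min 1 (\<delta>' / (6 * c2' + 1)))"
  have dl: "0 < \<delta>" "\<delta> \<le> 1" "2 * \<delta> < d0" using d0 dl' c2' unfolding \<delta>_def by auto
  have d3: "3 * c2' * \<delta> \<le> \<delta>'/2"
  proof -
    have "\<delta> \<le> \<delta>' / (6 * c2' + 1)" unfolding \<delta>_def by simp
    then have "(6 * c2' + 1) * \<delta> \<le> \<delta>'" using c2' by (simp add: le_divide_eq mult.commute)
    then have "6 * (c2' * \<delta>) + \<delta> \<le> \<delta>'" by (simp add: algebra_simps)
    then show ?thesis using dl by linarith
  qed
  have K'c: "compact (F \<inter> cball \<rho> r)" using F_proper r by auto
  have cov: "F \<inter> cball \<rho> r \<subseteq> (\<Union>c\<in>F \<inter> cball \<rho> r. ball c \<delta>)" using dl by force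
  obtain Y where Y: "Y \<subseteq> F \<inter> cball \<rho> r" "finite Y" "F \<inter> cball \<rho> r \<subseteq> (\<Union>y\<in>Y. ball y \<delta>)"
    using compactE_image[OF K'c open_ball cov] by blast
  have Yne: "Y \<noteq> {}" using Y(3) rho_F r by auto
  define cm where "cm = Min ((\<lambda>y. measure \<nu> (ball y \<delta>)) ` Y)"
  have cm: "cm > 0" "\<forall>y\<in>Y. cm \<le> measure \<nu> (ball y \<delta>)"
    unfolding cm_def using Y Yne ball_pos dl by (auto simp: Min_gr_iff)
  define e1 where "e1 = min (cm/2) (cm * \<epsilon> / (32 * (Qm + 1)))"
  define e2 where "e2 = cm * \<epsilon> / 32"
  have e12: "e1 > 0" "e2 > 0" "e1 \<le> cm/2" "e1 * (Qm + 1) \<le> cm * \<epsilon> / 32" "e2 \<le> cm * \<epsilon> / 32"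
  proof -
    show "e1 > 0" "e2 > 0" "e2 \<le> cm * \<epsilon> / 32" using cm Qm eps_pos unfolding e1_def e2_def by auto
    show "e1 \<le> cm/2" unfolding e1_def by (rule min.cobounded1)
    have "e1 \<le> cm * \<epsilon> / (32 * (Qm + 1))" unfolding e1_def by simp
    then have "e1 * (32 * (Qm + 1)) \<le> cm * \<epsilon>" using Qm by (simp add: le_divide_eq)
    then show "e1 * (Qm + 1) \<le> cm * \<epsilon> / 32" by (simp add: le_divide_eq algebra_simps)
  qed
  define E1 where "E1 = (\<lambda>y n. {w. \<bar>gmeas w (adj n) (V n) (ball y \<delta>) / \<beta> n - measure \<nu> (ball y \<delta>)\<bar> > e1})"
  define E2 where "E2 = (\<lambda>y n. {w. \<exists>t\<in>{a..b+1}. \<bar>hitp w (adj n) (nat \<lfloor>\<gamma> n * t\<rfloor>) \<rho> (ball y \<delta>)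
             - enn2real (\<integral>\<^sup>+z\<in>ball y \<delta> \<inter> F. ennreal (q t z) \<partial>\<nu>)\<bar> > e2})"
  have "(\<lambda>n. \<Sum>y\<in>Y. outer_prob M (E1 y n) + outer_prob M (E2 y n)) \<longlonglongrightarrow> (\<Sum>y\<in>Y. 0 + 0)"
  proof (intro tendsto_sum tendsto_add)
    fix y assume y: "y \<in> Y"
    then have yF: "y \<in> F" using Y by auto
    show "(\<lambda>n. outer_prob M (E1 y n)) \<longlonglongrightarrow> 0"
      unfolding E1_def using A1c yF dl e12 by blast
    have "0 < a \<and> a \<le> b + 1" using a by auto
    then show "(\<lambda>n. outer_prob M (E2 y n)) \<longlonglongrightarrow> 0"
      unfolding E2_def using A1d yF dl e12 by blast
  qed
  then have evE12: "eventually (\<lambda>n. (\<Sum>y\<in>Y. outer_prob M (E1 y n) + outer_prob M (E2 y n)) < \<eta>/2) sequentially"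
    using eta by (intro order_tendstoD(2)) auto
  have ev_al: "eventually (\<lambda>n. \<alpha> n \<ge> 1) sequentially" using \<alpha>_lim by (simp add: filterlim_at_top)
  have ev_be: "eventually (\<lambda>n. \<beta> n \<ge> 1) sequentially" using \<beta>_lim by (simp add: filterlim_at_top)
  have ev_ga: "eventually (\<lambda>n. \<gamma> n \<ge> max 1 (2 / d0)) sequentially" using \<gamma>_lim by (simp only: filterlim_at_top)
  have ev_aT: "eventually (\<lambda>n. norm (aT n) \<le> min (\<delta>'/2) (1/2) * norm (\<alpha> n)) sequentially"
    using landau_o.smallD[OF aT(2)] dl' by simp
  have ev_inf: "eventually (\<lambda>n. (SUP x\<in>ball \<rho> r \<inter> F. ennreal (infdist x (V n))) < ennreal \<delta>) sequentially"
    using order_tendstoD(2)[OF A1b[rule_format, OF r]] dl by simp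
  have ev_n0: "eventually (\<lambda>n. n \<ge> n0) sequentially" by (rule eventually_ge_at_top)
  obtain N where N: "\<forall>n\<ge>N. ereal (outer_prob M (E3 n)) < ereal (\<eta>/4) \<and>
      (\<Sum>y\<in>Y. outer_prob M (E1 y n) + outer_prob M (E2 y n)) < \<eta>/2 \<and>
      \<alpha> n \<ge> 1 \<and> \<beta> n \<ge> 1 \<and> \<gamma> n \<ge> max 1 (2 / d0) \<and> norm (aT n) \<le> min (\<delta>'/2) (1/2) * norm (\<alpha> n) \<and>
      (SUP x\<in>ball \<rho> r \<inter> F. ennreal (infdist x (V n))) < ennreal \<delta> \<and> n \<ge> n0"
    using eventually_conj[OF evE3 eventually_conj[OF evE12 eventually_conj[OF ev_al eventually_conj[OF ev_be
      eventually_conj[OF ev_ga eventually_conj[OF ev_aT eventually_conj[OF ev_inf ev_n0]]]]]]]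
    unfolding eventually_sequentially by blast
  have "\<forall>n\<ge>N. outer_prob M {w. \<exists>x\<in>F \<inter> ball \<rho> r. \<exists>t\<in>{a..b}.
     \<bar>\<beta> n * qk w (adj n) (nat \<lfloor>\<gamma> n * t\<rfloor>) \<rho> (g n x) - q t x\<bar> > \<epsilon>} < \<eta>"
  proof (intro allI impI)
    fix n assume n: "n \<ge> N"
    note Nn = N[rule_format, OF n]
    have al: "\<alpha> n \<ge> 1" and be: "\<beta> n \<ge> 1" and ga: "\<gamma> n \<ge> max 1 (2 / d0)" and nn0: "n \<ge> n0"
      using Nn by auto
    have aTb: "aT n \<le> \<alpha> n * (\<delta>'/2)" "aT n < \<alpha> n"
    proof -
      have "aT n \<le> min (\<delta>'/2) (1/2) * \<alpha> n" using Nn aT(1) al by auto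
      moreover have "min (\<delta>'/2) (1/2) * \<alpha> n \<le> \<alpha> n * (\<delta>'/2)"
        using al by (subst mult.commute) (intro mult_left_mono, auto)
      moreover have "min (\<delta>'/2) (1/2) * \<alpha> n \<le> (1/2) * \<alpha> n"
        using al by (intro mult_right_mono) auto
      ultimately show "aT n \<le> \<alpha> n * (\<delta>'/2)" "aT n < \<alpha> n" using al by linarith+
    qed
    have g1: "1 / \<gamma> n < d0"
    proof -
      have "2 / d0 \<le> \<gamma> n" using ga by auto
      then have "2 \<le> \<gamma> n * d0" using d0 by (simp add: divide_le_eq)
      then have "1 < \<gamma> n * d0" by simp
      then show ?thesis using ga by (simp add: divide_less_eq mult.commute)
    qed
    have inf: "infdist x (V n) < \<delta>" if "x \<in> ball \<rho> r \<inter> F" for x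
    proof -
      have "ennreal (infdist x (V n)) < ennreal \<delta>" using Nn that by (meson SUP_upper le_less_trans)
      then show ?thesis using dl(1) by (rule ennreal_less_real)
    qed
    let ?NE = "{w. \<exists>x\<in>F \<inter> ball \<rho> r. \<exists>t\<in>{a..b}.
     \<bar>\<beta> n * qk w (adj n) (nat \<lfloor>\<gamma> n * t\<rfloor>) \<rho> (g n x) - q t x\<bar> > \<epsilon>}"
    have "outer_prob M ?NE \<le> outer_prob M (E3 n \<union> (\<Union>y\<in>Y. E1 y n \<union> E2 y n))"
    proof (rule op_mono, rule subsetI)
      fix w assume hw: "w \<in> ?NE \<inter> space M"
      then obtain x t where w: "w \<in> space M" and x: "x \<in> F" "x \<in> ball \<rho> r" and t: "t \<in> {a..b}"
        and big: "\<bar>\<beta> n * qk w (adj n) (nat \<lfloor>\<gamma> n * t\<rfloor>) \<rho> (g n x) - q t x\<bar> > \<epsilon>" by auto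
      have "w \<in> E3 n \<union> (\<Union>y\<in>Y. E1 y n \<union> E2 y n)"
      proof (rule ccontr)
        assume nw: "w \<notin> E3 n \<union> (\<Union>y\<in>Y. E1 y n \<union> E2 y n)"
        obtain y where y: "y \<in> Y" "dist y x < \<delta>" using x Y(3) by force
        have yF: "y \<in> F" "dist \<rho> y \<le> r" using y Y(1) by auto
        have gx: "dist x (g n x) < \<delta>" using g_close[of x n] inf[of x] x by (simp add: dist_commute)
        have "\<bar>\<beta> n * qk w (adj n) (nat \<lfloor>\<gamma> n * t\<rfloor>) \<rho> (g n x) - q t x\<bar> \<le> 5/8 * \<epsilon>"
        proof (rule near_core[OF w a t x(1) _ _ _ dl gx _ _ _ g1 c2' _ aTb d3 _ _ _ d0(2) Qm(2) cm(1) _ e12(3) e12(4) e12(5)])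
          show "dist \<rho> x < r" using x by (simp add: dist_commute)
          show "dist x y < \<delta>" using y by (simp add: dist_commute)
          show "dist \<rho> y \<le> r" using yF by simp
          show "\<alpha> n > 0" "\<beta> n > 0" "\<gamma> n \<ge> 1" using al be ga by auto
          show "\<forall>x\<in>V n \<inter> ball \<rho> (r+1). \<forall>y\<in>V n \<inter> ball \<rho> (r+1).
              real (gdist (adj n) x y) \<le> c2' * \<alpha> n * dist x y + aT n" using c2b nn0 by blast
          show "\<not> (\<exists>x\<in>gball (V n) (adj n) \<rho> (\<alpha> n * (c2' * (r+1) + 1)).
                \<exists>y\<in>gball (V n) (adj n) \<rho> (\<alpha> n * (c2' * (r+1) + 1)).
                real (gdist (adj n) x y) \<le> \<alpha> n * \<delta>' \<and>
                (\<exists>t\<in>{a..b}. \<beta> n * \<bar>qk w (adj n) (nat \<lfloor>\<gamma> n * t\<rfloor>) \<rho> x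
                                   - qk w (adj n) (nat \<lfloor>\<gamma> n * t\<rfloor>) \<rho> y\<bar> > \<epsilon>/4))"
            using nw unfolding E3_def r2_def by blast
          show "\<bar>gmeas w (adj n) (V n) (ball y \<delta>) / \<beta> n - measure \<nu> (ball y \<delta>)\<bar> \<le> e1"
            using nw y unfolding E1_def by force
          show "\<forall>t\<in>{a..b+1}. \<bar>hitp w (adj n) (nat \<lfloor>\<gamma> n * t\<rfloor>) \<rho> (ball y \<delta>)
             - enn2real (\<integral>\<^sup>+z\<in>ball y \<delta> \<inter> F. ennreal (q t z) \<partial>\<nu>)\<bar> \<le> e2"
            using nw y unfolding E2_def by force
          show "cm \<le> measure \<nu> (ball y \<delta>)" using cm y by auto
        qed
        then show False using big eps_pos by linarith
      qed
      then show "w \<in> (E3 n \<union> (\<Union>y\<in>Y. E1 y n \<union> E2 y n)) \<inter> space M" using w by simp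
    qed
    also have "\<dots> \<le> outer_prob M (E3 n) + outer_prob M (\<Union>y\<in>Y. E1 y n \<union> E2 y n)"
      by (rule op_un[OF M_prob])
    also have "outer_prob M (\<Union>y\<in>Y. E1 y n \<union> E2 y n) \<le> (\<Sum>y\<in>Y. outer_prob M (E1 y n \<union> E2 y n))"
      by (rule op_UN[OF M_prob Y(2)])
    also have "\<dots> \<le> (\<Sum>y\<in>Y. outer_prob M (E1 y n) + outer_prob M (E2 y n))"
      by (intro sum_mono op_un[OF M_prob])
    finally have fin: "outer_prob M ?NE \<le> outer_prob M (E3 n) + (\<Sum>y\<in>Y. outer_prob M (E1 y n) + outer_prob M (E2 y n))" by auto
    moreover have "outer_prob M (E3 n) < \<eta>/4" using Nn by simp
    moreover have "(\<Sum>y\<in>Y. outer_prob M (E1 y n) + outer_prob M (E2 y n)) < \<eta>/2" using Nn by simp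
    ultimately show "outer_prob M ?NE < \<eta>" using eta by linarith
  qed
  then show ?thesis by blast
qed

end

context setting begin

lemma main_loc:
  "(\<lambda>n. outer_prob M
     {w. \<exists>x\<in>F. \<exists>t\<ge>T1. \<bar>\<beta> n * qk w (adj n) (nat \<lfloor>\<gamma> n * t\<rfloor>) \<rho> (g n x) - q t x\<bar> > \<epsilon>})
     \<longlonglongrightarrow> 0"
proof (rule LIMSEQ_I)
  fix \<eta> :: real assume eta: "\<eta> > 0"
  then have eta3: "\<eta>/3 > 0" by simp
  obtain T where T: "T \<ge> T1" "\<forall>t\<ge>T. \<forall>x\<in>F. q t x < \<epsilon>/2"
    and N1: "\<exists>N. \<forall>n\<ge>N. outer_prob M {w. \<exists>x\<in>V n. \<beta> n * qk w (adj n) (nat \<lfloor>\<gamma> n * T\<rfloor>) \<rho> x > \<epsilon>/2} < \<eta>/3"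
    using large_t[OF eta3] by blast
  obtain N1 where N1: "\<forall>n\<ge>N1. outer_prob M {w. \<exists>x\<in>V n. \<beta> n * qk w (adj n) (nat \<lfloor>\<gamma> n * T\<rfloor>) \<rho> x > \<epsilon>/2} < \<eta>/3"
    using N1 by blast
  have T0: "T > 0" using T T1_pos by linarith
  obtain r N2 where r: "r > 0" and N2: "\<forall>n\<ge>N2. outer_prob M {w. \<exists>x\<in>F - ball \<rho> r. \<exists>t\<in>{T1..T}.
     \<bar>\<beta> n * qk w (adj n) (nat \<lfloor>\<gamma> n * t\<rfloor>) \<rho> (g n x) - q t x\<bar> > \<epsilon>} < \<eta>/3"
    using far[OF T1_pos T(1) eta3] by blast
  obtain N3 where N3: "\<forall>n\<ge>N3. outer_prob M {w. \<exists>x\<in>F \<inter> ball \<rho> r. \<exists>t\<in>{T1..T}.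
     \<bar>\<beta> n * qk w (adj n) (nat \<lfloor>\<gamma> n * t\<rfloor>) \<rho> (g n x) - q t x\<bar> > \<epsilon>} < \<eta>/3"
    using near[OF T1_pos T(1) r eta3] by blast
  show "\<exists>no. \<forall>n\<ge>no. norm (outer_prob M
     {w. \<exists>x\<in>F. \<exists>t\<ge>T1. \<bar>\<beta> n * qk w (adj n) (nat \<lfloor>\<gamma> n * t\<rfloor>) \<rho> (g n x) - q t x\<bar> > \<epsilon>} - 0) < \<eta>"
  proof (intro exI[of _ "max N1 (max N2 N3)"] allI impI)
    fix n assume n: "n \<ge> max N1 (max N2 N3)"
    let ?A = "{w. \<exists>x\<in>F \<inter> ball \<rho> r. \<exists>t\<in>{T1..T}.
     \<bar>\<beta> n * qk w (adj n) (nat \<lfloor>\<gamma> n * t\<rfloor>) \<rho> (g n x) - q t x\<bar> > \<epsilon>}"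
    let ?B = "{w. \<exists>x\<in>F - ball \<rho> r. \<exists>t\<in>{T1..T}.
     \<bar>\<beta> n * qk w (adj n) (nat \<lfloor>\<gamma> n * t\<rfloor>) \<rho> (g n x) - q t x\<bar> > \<epsilon>}"
    let ?C = "{w. \<exists>x\<in>V n. \<beta> n * qk w (adj n) (nat \<lfloor>\<gamma> n * T\<rfloor>) \<rho> x > \<epsilon>/2}"
    let ?E = "{w. \<exists>x\<in>F. \<exists>t\<ge>T1. \<bar>\<beta> n * qk w (adj n) (nat \<lfloor>\<gamma> n * t\<rfloor>) \<rho> (g n x) - q t x\<bar> > \<epsilon>}"
    have "outer_prob M ?E \<le> outer_prob M ((?A \<union> ?B) \<union> ?C)"
    proof (rule op_mono, rule subsetI)
      fix w assume "w \<in> ?E \<inter> space M"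
      then obtain x t where w: "w \<in> space M" and x: "x \<in> F" and t: "T1 \<le> t"
        and big: "\<bar>\<beta> n * qk w (adj n) (nat \<lfloor>\<gamma> n * t\<rfloor>) \<rho> (g n x) - q t x\<bar> > \<epsilon>" by auto
      have "w \<in> (?A \<union> ?B) \<union> ?C"
      proof (cases "t \<le> T")
        case True
        then have tt: "t \<in> {T1..T}" using t by auto
        show ?thesis
        proof (cases "x \<in> ball \<rho> r")
          case True
          then have "w \<in> ?A" using tt x big by blast
          then show ?thesis by blast
        next
          case False
          then have "w \<in> ?B" using tt x big by blast
          then show ?thesis by blast
        qed
      next
        case False
        then have "w \<in> ?C" using large_incl[OF w _ T0 T(2) x big] by auto
        then show ?thesis by blast
      qed
      then show "w \<in> ((?A \<union> ?B) \<union> ?C) \<inter> space M" using w by blast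
    qed
    also have "\<dots> \<le> outer_prob M (?A \<union> ?B) + outer_prob M ?C" by (rule op_un[OF M_prob])
    also have "\<dots> \<le> outer_prob M ?A + outer_prob M ?B + outer_prob M ?C"
      using op_un[OF M_prob, of ?A ?B] by simp
    also have "\<dots> < \<eta>/3 + \<eta>/3 + \<eta>/3" using N1 N2 N3 n by (intro add_strict_mono) auto
    finally have lt: "outer_prob M ?E < \<eta>" by simp
    have "outer_prob M ?E \<ge> 0" by (rule op_nonneg[OF M_prob])
    then show "norm (outer_prob M ?E - 0) < \<eta>" using lt by simp
  qed
qed

end

theorem theorem6p2:
  fixes F :: "'e::metric_space set" and \<rho> :: 'e and \<nu> :: "'e measure"
    and q :: "real \<Rightarrow> 'e \<Rightarrow> real"
    and V :: "nat \<Rightarrow> 'e set" and adj :: "nat \<Rightarrow> 'e \<Rightarrow> 'e \<Rightarrow> bool"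
    and M :: "('e \<Rightarrow> 'e \<Rightarrow> real) measure"
    and \<alpha> \<beta> \<gamma> :: "nat \<Rightarrow> real" and g :: "nat \<Rightarrow> 'e \<Rightarrow> 'e"
    and T1 \<epsilon> :: real
  assumes F_proper: "\<forall>x r. r > 0 \<longrightarrow> compact (F \<inter> cball x r)"
    and rho_F: "\<rho> \<in> F"
    and nu_sets: "sets \<nu> = sets borel"
    and nu_ext: "emeasure \<nu> (UNIV - F) = 0"
    and nu_lfin: "\<forall>K. compact K \<and> K \<subseteq> F \<longrightarrow> emeasure \<nu> K < \<infinity>"
    and nu_inner: "\<forall>A\<in>sets borel. emeasure \<nu> A = (SUP K\<in>{K. compact K \<and> K \<subseteq> A \<inter> F}. emeasure \<nu> K)"
    and nu_supp: "\<forall>x\<in>F. \<forall>r>0. emeasure \<nu> (ball x r) > 0"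
    and q_cont: "continuous_on ({0<..} \<times> F) (\<lambda>(t, x). q t x)"
    and q_nonneg: "\<forall>t>0. \<forall>x\<in>F. q t x \<ge> 0"
    and q_int: "\<forall>t>0. (\<integral>\<^sup>+x\<in>F. ennreal (q t x) \<partial>\<nu>) = 1"
    and G_edges: "\<forall>n x y. adj n x y \<longrightarrow> x \<in> V n \<and> y \<in> V n"
    and G_sym: "\<forall>n x y. adj n x y \<longrightarrow> adj n y x"
    and G_irrefl: "\<forall>n x. \<not> adj n x x"
    and G_locfin: "\<forall>n x. finite {y. adj n x y}"
    and G_conn: "\<forall>n. \<forall>x\<in>V n. \<forall>y\<in>V n. \<exists>k. (adj n ^^ k) x y"
    and G_two: "\<forall>n. \<exists>x\<in>V n. \<exists>y\<in>V n. x \<noteq> y"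
    and G_root: "\<forall>n. \<rho> \<in> V n"
    and M_prob: "prob_space M"
    and M_wts: "\<forall>w\<in>space M. \<forall>n x y. adj n x y \<longrightarrow> 0 < w x y \<and> w x y = w y x"
    and \<alpha>_nonneg: "\<forall>n. \<alpha> n \<ge> 0" and \<beta>_nonneg: "\<forall>n. \<beta> n \<ge> 0" and \<gamma>_nonneg: "\<forall>n. \<gamma> n \<ge> 0"
    and \<alpha>_lim: "filterlim \<alpha> at_top sequentially"
    and \<beta>_lim: "filterlim \<beta> at_top sequentially"
    and \<gamma>_lim: "filterlim \<gamma> at_top sequentially"
    and g_def: "\<forall>n x. g n x \<in> V n \<and> (\<forall>v\<in>V n. dist x (g n x) \<le> dist x v)"
    \<comment> \<open>(A1R)(a)\<close>
    and A1a1: "\<exists>c1>0. \<forall>n. \<forall>x\<in>V n. \<forall>y\<in>V n. real (gdist (adj n) x y) \<ge> c1 * \<alpha> n * dist x y"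
    and A1a2: "\<exists>\<alpha>t :: nat \<Rightarrow> real. (\<forall>n. \<alpha>t n \<ge> 0) \<and> \<alpha>t \<in> o(\<alpha>) \<and>
       (\<forall>r>0. \<exists>c2. \<exists>n0. \<forall>n\<ge>n0. \<forall>x\<in>V n \<inter> ball \<rho> r. \<forall>y\<in>V n \<inter> ball \<rho> r.
          real (gdist (adj n) x y) \<le> c2 * \<alpha> n * dist x y + \<alpha>t n)"
    \<comment> \<open>(A1R)(b)\<close>
    and A1b: "\<forall>r>0. (\<lambda>n. SUP x\<in>ball \<rho> r \<inter> F. ennreal (infdist x (V n))) \<longlonglongrightarrow> 0"
    \<comment> \<open>(A1R)(c)\<close>
    and A1c: "\<forall>x\<in>F. \<forall>r>0. \<forall>e>0. (\<lambda>n. outer_prob M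
        {w. \<bar>gmeas w (adj n) (V n) (ball x r) / \<beta> n - measure \<nu> (ball x r)\<bar> > e}) \<longlonglongrightarrow> 0"
    \<comment> \<open>(A1R)(d)\<close>
    and A1d: "\<forall>a b. 0 < a \<and> a \<le> b \<longrightarrow> (\<forall>x\<in>F. \<forall>r>0. \<forall>e>0. (\<lambda>n. outer_prob M
        {w. \<exists>t\<in>{a..b}. \<bar>hitp w (adj n) (nat \<lfloor>\<gamma> n * t\<rfloor>) \<rho> (ball x r)
             - enn2real (\<integral>\<^sup>+y\<in>ball x r \<inter> F. ennreal (q t y) \<partial>\<nu>)\<bar> > e}) \<longlonglongrightarrow> 0)"
    \<comment> \<open>(A2R)\<close>
    and A2: "\<forall>a b. 0 < a \<and> a \<le> b \<longrightarrow> (\<forall>r>0. \<forall>e>0.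
        ((\<lambda>\<delta>. limsup (\<lambda>n. ereal (outer_prob M
          {w. \<exists>x\<in>gball (V n) (adj n) \<rho> (\<alpha> n * r). \<exists>y\<in>gball (V n) (adj n) \<rho> (\<alpha> n * r).
                real (gdist (adj n) x y) \<le> \<alpha> n * \<delta> \<and>
                (\<exists>t\<in>{a..b}. \<beta> n * \<bar>qk w (adj n) (nat \<lfloor>\<gamma> n * t\<rfloor>) \<rho> x
                                   - qk w (adj n) (nat \<lfloor>\<gamma> n * t\<rfloor>) \<rho> y\<bar> > e)})))
         \<longlongrightarrow> 0) (at_right 0))"
    \<comment> \<open>(A3R)\<close>
    and A3_mid: "midpoint_property F"
    and A3a1: "((\<lambda>t. SUP x\<in>F. ennreal (q t x)) \<longlongrightarrow> 0) at_top"
    and A3a2: "\<forall>a b. 0 < a \<and> a \<le> b \<longrightarrow>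
        ((\<lambda>r. SUP x\<in>F - ball \<rho> r. SUP t\<in>{a..b}. ennreal (q t x)) \<longlongrightarrow> 0) at_top"
    and A3b1: "\<forall>e>0. ((\<lambda>t. limsup (\<lambda>n. ereal (outer_prob M
        {w. \<exists>x\<in>V n. \<beta> n * qk w (adj n) (nat \<lfloor>\<gamma> n * t\<rfloor>) \<rho> x > e}))) \<longlongrightarrow> 0) at_top"
    and A3b2: "\<forall>a b. 0 < a \<and> a \<le> b \<longrightarrow> (\<forall>e>0. ((\<lambda>r. limsup (\<lambda>n. ereal (outer_prob M
        {w. \<exists>x\<in>V n - gball (V n) (adj n) \<rho> (\<alpha> n * r). \<exists>t\<in>{a..b}.
              \<beta> n * qk w (adj n) (nat \<lfloor>\<gamma> n * t\<rfloor>) \<rho> x > e}))) \<longlongrightarrow> 0) at_top)"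
    and T1_pos: "T1 > 0"
    and eps_pos: "\<epsilon> > 0"
  shows "(\<lambda>n. outer_prob M
     {w. \<exists>x\<in>F. \<exists>t\<ge>T1. \<bar>\<beta> n * qk w (adj n) (nat \<lfloor>\<gamma> n * t\<rfloor>) \<rho> (g n x) - q t x\<bar> > \<epsilon>})
     \<longlonglongrightarrow> 0"
  proof -
  have "setting F \<rho> \<nu> q V adj M \<alpha> \<beta> \<gamma> g T1 \<epsilon>"
    using assms by (rule setting.intro)
  then show ?thesis by (rule setting.main_loc)
qed

end
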